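(* For all integers $n\ge 1$, $S_H^{\pm}(n,n-1)=5\binom{n+1}{4}+4\binom{n+1}{3}$.
   Context: $S_H^{\pm}(n,k)$ is the number of signed permutations $\pi$ of $\{1,\dots,n\}$ with $c(BG(\pi))=k$, where: $\pi'$ is the unsigned permutation of $\{1,\dots,2n\}$ obtained by replacing each $\pi_i>0$ by $(2\pi_i-1,2\pi_i)$ and each $\pi_i<0$ by $(2|\pi_i|,2|\pi_i|-1)$, with $\pi'_0=0,\pi'_{2n+1}=2n+1$; $BG(\pi)$ is the multigraph on $\{0,\dots,2n+1\}$ with black edges $\{\{\pi'_{2i},\pi'_{2i+1}\}:0\le i\le n\}$ and grey edges $\{\{2i,2i+1\}:0\le i\le n\}$ (parallel edges kept); $c$ counts its cycles. Binomial coefficients $\binom{m}{j}$ are $0$ when $j>m$. *)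

theory Defs
  imports Main
begin

definition signed_perm :: "nat \<Rightarrow> (nat \<Rightarrow> int) \<Rightarrow> bool" where
  "signed_perm n \<pi> \<longleftrightarrow>
     bij_betw (\<lambda>i. nat \<bar>\<pi> i\<bar>) {1..n} {1..n} \<and> (\<forall>i. i \<notin> {1..n} \<longrightarrow> \<pi> i = 0)"

definition unsigned_ext :: "nat \<Rightarrow> (nat \<Rightarrow> int) \<Rightarrow> nat \<Rightarrow> nat" where
  "unsigned_ext n \<pi> j =
     (if j = 0 then 0
      else if j = 2*n+1 then 2*n+1
      else (let i = (j+1) div 2; v = nat \<bar>\<pi> i\<bar> in
            if \<pi> i > 0 then (if odd j then 2*v - 1 else 2*v)
            else (if odd j then 2*v else 2*v - 1)))"

text \<open>Adjacency relation of the breakpoint graph BG(pi): black edges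
  {pi'_(2i), pi'_(2i+1)} and grey edges {2i, 2i+1}, 0 <= i <= n (both directions).\<close>
definition bg_adj :: "nat \<Rightarrow> (nat \<Rightarrow> int) \<Rightarrow> (nat \<times> nat) set" where
  "bg_adj n \<pi> = {(u,v). \<exists>i\<le>n.
       {u,v} = {unsigned_ext n \<pi> (2*i), unsigned_ext n \<pi> (2*i+1)} \<or> {u,v} = {2*i, 2*i+1}}"

text \<open>Every vertex of BG(pi) has degree 2 (one black, one grey edge, parallel edges
  kept), so BG(pi) is a disjoint union of cycles; the number of cycles is the number
  of connected components.\<close>
definition bg_cycles :: "nat \<Rightarrow> (nat \<Rightarrow> int) \<Rightarrow> nat" where
  "bg_cycles n \<pi> = card ({0..2*n+1} // ((bg_adj n \<pi>)\<^sup>*))"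

definition S_H_pm :: "nat \<Rightarrow> nat \<Rightarrow> nat" where
  "S_H_pm n k = card {\<pi>. signed_perm n \<pi> \<and> bg_cycles n \<pi> = k}"

end

theory Submission
  imports Defs
begin

definition Rv :: "int \<Rightarrow> nat" where "Rv x = (if x \<ge> 0 then 2 * nat x else 2 * nat (-x) - 1)"
definition Lv :: "int \<Rightarrow> nat" where "Lv x = (if x > 0 then 2 * nat x - 1 else 2 * nat (-x))"
definition flip :: "nat \<Rightarrow> nat" where "flip j = (if even j then Suc j else j - 1)"
definition qf :: "nat \<Rightarrow> (nat \<Rightarrow> int) \<Rightarrow> nat \<Rightarrow> int" where
  "qf n \<pi> i = (if i = 0 then 0 else if i = n+1 then int n + 1 else \<pi> i)"

lemma ext_formula:
  assumes "j \<le> 2*n+1"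
  shows "unsigned_ext n \<pi> j = (if even j then Rv (qf n \<pi> (j div 2)) else Lv (qf n \<pi> ((j+1) div 2)))"
proof -
  consider "j = 0" | "j = 2*n+1" | "j \<noteq> 0" "j \<noteq> 2*n+1" by blast
  then show ?thesis
  proof cases
    case 1 then show ?thesis by (simp add: unsigned_ext_def Rv_def qf_def)
  next
    case 2 then show ?thesis by (simp add: unsigned_ext_def Lv_def qf_def nat_add_distrib)
  next
    case 3
    have i1: "(j+1) div 2 \<noteq> 0" using 3 by auto
    have i2: "(j+1) div 2 \<noteq> n+1" using 3 assms by auto
    have ev: "even j \<Longrightarrow> (j+1) div 2 = j div 2" by presburger
    show ?thesis using 3 i1 i2 ev
      by (auto simp: unsigned_ext_def Rv_def Lv_def qf_def Let_def)
  qed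
qed

lemma flip_Rv: "flip (Rv x) = Lv (x + 1)"
  unfolding flip_def Rv_def Lv_def by (cases "x \<ge> 0"; simp; presburger)
lemma flip_Lv: "flip (Lv x) = Rv (x - 1)"
  unfolding flip_def Rv_def Lv_def by (cases "x > 0"; cases "x = 1"; simp; presburger)
lemma flip_flip[simp]: "flip (flip v) = v"
  unfolding flip_def by presburger
lemma flip_inj: "flip u = flip v \<longleftrightarrow> u = v"
  by (metis flip_flip)
lemma Lv_Rv: "Lv x = Rv (-x)"
  unfolding Rv_def Lv_def by auto
lemma Rv_int: "int (Rv x) = (if x \<ge> 0 then 2*x else -2*x - 1)"
  unfolding Rv_def by auto
lemma Lv_int: "int (Lv x) = (if x > 0 then 2*x - 1 else -2*x)"
  unfolding Lv_def by auto
lemma Rv_inj: "Rv x = Rv y \<longleftrightarrow> x = y"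
proof
  assume "Rv x = Rv y"
  then have "int (Rv x) = int (Rv y)" by simp
  then show "x = y" unfolding Rv_int by (auto split: if_splits) presburger+
qed simp
lemma Lv_inj: "Lv x = Lv y \<longleftrightarrow> x = y"
  unfolding Lv_Rv Rv_inj by simp
lemma flip_le: "v \<le> 2*n+1 \<Longrightarrow> flip v \<le> 2*n+1"
  unfolding flip_def by presburger
lemma flip_neq: "flip v \<noteq> v"
  unfolding flip_def by presburger

context
  fixes n :: nat and \<pi> :: "nat \<Rightarrow> int"
  assumes sp: "signed_perm n \<pi>"
begin

lemma sp_zero: "i \<notin> {1..n} \<Longrightarrow> \<pi> i = 0"
  using sp unfolding signed_perm_def by auto

lemma sp_in: "i \<in> {1..n} \<Longrightarrow> nat \<bar>\<pi> i\<bar> \<in> {1..n}"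
  using sp unfolding signed_perm_def bij_betw_def by auto

lemma sp_nz: "i \<in> {1..n} \<Longrightarrow> \<pi> i \<noteq> 0"
  using sp_in by fastforce

lemma sp_le: "i \<in> {1..n} \<Longrightarrow> \<bar>\<pi> i\<bar> \<le> int n"
  using sp_in by fastforce

lemma sp_absinj: "i \<in> {1..n} \<Longrightarrow> i' \<in> {1..n} \<Longrightarrow> \<bar>\<pi> i\<bar> = \<bar>\<pi> i'\<bar> \<Longrightarrow> i = i'"
proof -
  assume a: "i \<in> {1..n}" "i' \<in> {1..n}" "\<bar>\<pi> i\<bar> = \<bar>\<pi> i'\<bar>"
  have "inj_on (\<lambda>i. nat \<bar>\<pi> i\<bar>) {1..n}" using sp unfolding signed_perm_def bij_betw_def by blast
  moreover have "nat \<bar>\<pi> i\<bar> = nat \<bar>\<pi> i'\<bar>" using a by simp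
  ultimately show "i = i'" using a by (meson inj_onD)
qed

lemma sp_surj: "v \<in> {1..n} \<Longrightarrow> \<exists>i\<in>{1..n}. nat \<bar>\<pi> i\<bar> = v"
proof -
  assume v: "v \<in> {1..n}"
  have "(\<lambda>i. nat \<bar>\<pi> i\<bar>) ` {1..n} = {1..n}" using sp unfolding signed_perm_def bij_betw_def by blast
  then have "v \<in> (\<lambda>i. nat \<bar>\<pi> i\<bar>) ` {1..n}" using v by simp
  then show ?thesis by (simp only: image_iff) blast
qed

lemma Q_abs_inj: "i \<le> n+1 \<Longrightarrow> i' \<le> n+1 \<Longrightarrow> \<bar>qf n \<pi> i\<bar> = \<bar>qf n \<pi> i'\<bar> \<Longrightarrow> i = i'"
proof -
  assume a: "i \<le> n+1" "i' \<le> n+1" "\<bar>qf n \<pi> i\<bar> = \<bar>qf n \<pi> i'\<bar>"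
  have r: "j \<in> {1..n} \<Longrightarrow> 0 < \<bar>\<pi> j\<bar> \<and> \<bar>\<pi> j\<bar> \<le> int n" for j using sp_nz sp_le by auto
  show "i = i'"
  proof (cases "i \<in> {1..n} \<and> i' \<in> {1..n}")
    case True
    then have "qf n \<pi> i = \<pi> i" "qf n \<pi> i' = \<pi> i'" by (auto simp: qf_def)
    then show ?thesis using a(3) True sp_absinj by auto
  next
    case False then show ?thesis using a r[of i] r[of i'] by (auto simp: qf_def split: if_splits)
  qed
qed

lemma Q_nz: "1 \<le> i \<Longrightarrow> i \<le> n+1 \<Longrightarrow> qf n \<pi> i \<noteq> 0"
  using sp_nz by (auto simp: qf_def)

lemma Q_le: "i \<le> n \<Longrightarrow> \<bar>qf n \<pi> i\<bar> \<le> int n"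
  using sp_le by (auto simp: qf_def)

lemma ext_le: "j \<le> 2*n+1 \<Longrightarrow> unsigned_ext n \<pi> j \<le> 2*n+1"
proof -
  assume j: "j \<le> 2*n+1"
  show ?thesis
  proof (cases "even j")
    case True
    then have "j div 2 \<le> n" using j by presburger
    then have "\<bar>qf n \<pi> (j div 2)\<bar> \<le> int n" by (rule Q_le)
    then have "int (Rv (qf n \<pi> (j div 2))) \<le> 2*int n + 1" unfolding Rv_int by auto
    then show ?thesis using True j by (simp add: ext_formula)
  next
    case False
    show ?thesis
    proof (cases "(j+1) div 2 = n+1")
      case True then show ?thesis using False j
        by (simp add: ext_formula qf_def Lv_def nat_add_distrib)
    next
      case F2: False
      then have "(j+1) div 2 \<le> n" using j by presburger
      then have "\<bar>qf n \<pi> ((j+1) div 2)\<bar> \<le> int n" by (rule Q_le)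
      then have "int (Lv (qf n \<pi> ((j+1) div 2))) \<le> 2*int n + 1" unfolding Lv_int by auto
      then show ?thesis using False j by (simp add: ext_formula)
    qed
  qed
qed

lemma ext_inj: "j \<le> 2*n+1 \<Longrightarrow> j' \<le> 2*n+1 \<Longrightarrow> unsigned_ext n \<pi> j = unsigned_ext n \<pi> j' \<Longrightarrow> j = j'"
proof -
  assume j: "j \<le> 2*n+1" "j' \<le> 2*n+1" and e: "unsigned_ext n \<pi> j = unsigned_ext n \<pi> j'"
  have A: "\<And>a b. a \<le> n+1 \<Longrightarrow> b \<le> n+1 \<Longrightarrow> qf n \<pi> a = qf n \<pi> b \<Longrightarrow> a = b"
    using Q_abs_inj by auto
  have Bm: "\<And>a b. a \<le> n+1 \<Longrightarrow> 1 \<le> b \<Longrightarrow> b \<le> n+1 \<Longrightarrow> qf n \<pi> a = - qf n \<pi> b \<Longrightarrow> False"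
  proof -
    fix a b assume ab: "a \<le> n+1" "1 \<le> b" "b \<le> n+1" "qf n \<pi> a = - qf n \<pi> b"
    then have "a = b" using Q_abs_inj[of a b] by auto
    then show False using ab Q_nz[of b] by auto
  qed
  consider "even j" "even j'" | "even j" "odd j'" | "odd j" "even j'" | "odd j" "odd j'" by blast
  then show "j = j'"
  proof cases
    case 1
    then have "qf n \<pi> (j div 2) = qf n \<pi> (j' div 2)" using e j by (simp add: ext_formula Rv_inj)
    moreover have "j div 2 \<le> n+1" "j' div 2 \<le> n+1" using j by auto
    ultimately have "j div 2 = j' div 2" using A by blast
    then show ?thesis using 1 by presburger
  next
    case 2
    then have "qf n \<pi> (j div 2) = - qf n \<pi> ((j'+1) div 2)" using e j by (simp add: ext_formula Lv_Rv Rv_inj)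
    moreover have "j div 2 \<le> n+1" "1 \<le> (j'+1) div 2" "(j'+1) div 2 \<le> n+1" using j 2 by auto
    ultimately show ?thesis using Bm by blast
  next
    case 3
    then have "qf n \<pi> (j' div 2) = - qf n \<pi> ((j+1) div 2)" using e j by (simp add: ext_formula Lv_Rv Rv_inj)
    moreover have "j' div 2 \<le> n+1" "1 \<le> (j+1) div 2" "(j+1) div 2 \<le> n+1" using j 3 by auto
    ultimately show ?thesis using Bm by blast
  next
    case 4
    then have "qf n \<pi> ((j+1) div 2) = qf n \<pi> ((j'+1) div 2)" using e j by (simp add: ext_formula Lv_inj)
    moreover have "(j+1) div 2 \<le> n+1" "(j'+1) div 2 \<le> n+1" using j by auto
    ultimately have "(j+1) div 2 = (j'+1) div 2" using A by blast
    then show ?thesis using 4 by presburger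
  qed
qed

lemma ext_bij: "bij_betw (unsigned_ext n \<pi>) {0..2*n+1} {0..2*n+1}"
proof -
  have inj: "inj_on (unsigned_ext n \<pi>) {0..2*n+1}" by (rule inj_onI) (rule ext_inj, auto)
  have sub: "unsigned_ext n \<pi> ` {0..2*n+1} \<subseteq> {0..2*n+1}" by (rule image_subsetI) (metis atLeastAtMost_iff ext_le le0)
  have "card (unsigned_ext n \<pi> ` {0..2*n+1}) = card {0..2*n+1::nat}" using inj by (simp add: card_image)
  then have "unsigned_ext n \<pi> ` {0..2*n+1} = {0..2*n+1}" using sub by (simp add: card_subset_eq)
  then show ?thesis using inj by (simp add: bij_betw_def)
qed

end

lemma class_sub:
  assumes "E \<subseteq> V \<times> V" "x \<in> V"
  shows "E\<^sup>* `` {x} \<subseteq> V"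
proof
  fix y assume "y \<in> E\<^sup>* `` {x}"
  then have "(x,y) \<in> E\<^sup>*" by simp
  then show "y \<in> V" by (induction rule: rtrancl_induct) (use assms in auto)
qed

lemma quot_card_iso:
  assumes bij: "bij_betw \<phi> V W" and EV: "E \<subseteq> V \<times> V" and EW: "E' \<subseteq> W \<times> W"
    and rel: "\<And>x y. x \<in> V \<Longrightarrow> y \<in> V \<Longrightarrow> (x,y) \<in> E \<longleftrightarrow> (\<phi> x, \<phi> y) \<in> E'"
  shows "card (V // E\<^sup>*) = card (W // E'\<^sup>*)"
proof -
  have injV: "inj_on \<phi> V" and imV: "\<phi> ` V = W" using bij by (auto simp: bij_betw_def)
  have cls: "\<phi> ` (E\<^sup>* `` {x}) = E'\<^sup>* `` {\<phi> x}" if x: "x \<in> V" for x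
  proof
    show "\<phi> ` (E\<^sup>* `` {x}) \<subseteq> E'\<^sup>* `` {\<phi> x}"
    proof
      fix z assume "z \<in> \<phi> ` (E\<^sup>* `` {x})"
      then obtain y where y: "(x,y) \<in> E\<^sup>*" "z = \<phi> y" by auto
      have "(\<phi> x, \<phi> y) \<in> E'\<^sup>* \<and> y \<in> V" using y(1)
      proof (induction rule: rtrancl_induct)
        case base then show ?case using x by simp
      next
        case (step y w)
        then have "w \<in> V" using EV by auto
        then have "(\<phi> y, \<phi> w) \<in> E'" using rel step by auto
        then show ?case using step \<open>w \<in> V\<close> by (meson rtrancl.rtrancl_into_rtrancl)
      qed
      then show "z \<in> E'\<^sup>* `` {\<phi> x}" using y by simp
    qed
  next
    show "E'\<^sup>* `` {\<phi> x} \<subseteq> \<phi> ` (E\<^sup>* `` {x})"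
    proof
      fix z assume "z \<in> E'\<^sup>* `` {\<phi> x}"
      then have "(\<phi> x, z) \<in> E'\<^sup>*" by simp
      then have "\<exists>y. (x,y) \<in> E\<^sup>* \<and> y \<in> V \<and> z = \<phi> y"
      proof (induction rule: rtrancl_induct)
        case base then show ?case using x by auto
      next
        case (step z w)
        then obtain y where y: "(x,y) \<in> E\<^sup>*" "y \<in> V" "z = \<phi> y" by auto
        have "w \<in> W" using step EW by auto
        then obtain y' where y': "y' \<in> V" "w = \<phi> y'" using imV by auto
        then have "(y,y') \<in> E" using rel step y by auto
        then show ?case using y y' by (intro exI[of _ y']) (auto intro: rtrancl.rtrancl_into_rtrancl)
      qed
      then show "z \<in> \<phi> ` (E\<^sup>* `` {x})" by auto
    qed
  qed
  have q: "W // E'\<^sup>* = (\<lambda>X. \<phi> ` X) ` (V // E\<^sup>*)"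
  proof -
    have "W // E'\<^sup>* = (\<lambda>x. E'\<^sup>* `` {x}) ` W" unfolding quotient_def by auto
    also have "\<dots> = (\<lambda>x. E'\<^sup>* `` {\<phi> x}) ` V" using imV by auto
    also have "\<dots> = (\<lambda>x. \<phi> ` (E\<^sup>* `` {x})) ` V" using cls by auto
    also have "\<dots> = (\<lambda>X. \<phi> ` X) ` (V // E\<^sup>*)" unfolding quotient_def by auto
    finally show ?thesis .
  qed
  have "inj_on (\<lambda>X. \<phi> ` X) (V // E\<^sup>*)"
  proof (rule inj_onI)
    fix X Y assume X: "X \<in> V // E\<^sup>*" and Y: "Y \<in> V // E\<^sup>*" and e: "\<phi> ` X = \<phi> ` Y"
    have "X \<subseteq> V" "Y \<subseteq> V" using X Y class_sub[OF EV] unfolding quotient_def by auto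
    then show "X = Y" using e injV by (simp add: inj_on_image_eq_iff)
  qed
  then show ?thesis using q by (simp add: card_image)
qed

lemma quot_card_remove:
  assumes fin: "finite V" and PV: "P \<subseteq> V" and Pne: "P \<noteq> {}" and EV: "E \<subseteq> V \<times> V"
    and cl: "\<And>x y. (x,y) \<in> E \<Longrightarrow> x \<in> P \<longleftrightarrow> y \<in> P"
    and con: "\<And>x y. x \<in> P \<Longrightarrow> y \<in> P \<Longrightarrow> (x,y) \<in> E\<^sup>*"
  shows "card (V // E\<^sup>*) = card ((V - P) // (E \<inter> (V-P) \<times> (V-P))\<^sup>*) + 1"
proof -
  define Er where "Er = E \<inter> (V-P) \<times> (V-P)"
  have c1: "E\<^sup>* `` {x} = Er\<^sup>* `` {x}" if x: "x \<in> V - P" for x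
  proof
    show "E\<^sup>* `` {x} \<subseteq> Er\<^sup>* `` {x}"
    proof
      fix y assume "y \<in> E\<^sup>* `` {x}"
      then have "(x,y) \<in> E\<^sup>*" by simp
      then have "(x,y) \<in> Er\<^sup>* \<and> y \<in> V - P"
      proof (induction rule: rtrancl_induct)
        case base then show ?case using x by simp
      next
        case (step y w)
        then have "w \<in> V - P" using EV cl by auto
        then have "(y,w) \<in> Er" using step unfolding Er_def by auto
        then show ?case using step \<open>w \<in> V - P\<close> by (meson rtrancl.rtrancl_into_rtrancl)
      qed
      then show "y \<in> Er\<^sup>* `` {x}" by simp
    qed
  next
    show "Er\<^sup>* `` {x} \<subseteq> E\<^sup>* `` {x}" unfolding Er_def by (meson Image_mono Int_lower1 order_refl rtrancl_mono)
  qed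
  have c2: "E\<^sup>* `` {x} = P" if x: "x \<in> P" for x
  proof
    show "E\<^sup>* `` {x} \<subseteq> P"
    proof
      fix y assume "y \<in> E\<^sup>* `` {x}"
      then have "(x,y) \<in> E\<^sup>*" by simp
      then show "y \<in> P" by (induction rule: rtrancl_induct) (use x cl in auto)
    qed
  next
    show "P \<subseteq> E\<^sup>* `` {x}" using con x by auto
  qed
  have q: "V // E\<^sup>* = insert P ((V - P) // Er\<^sup>*)"
  proof -
    have "V // E\<^sup>* = (\<lambda>x. E\<^sup>* `` {x}) ` P \<union> (\<lambda>x. E\<^sup>* `` {x}) ` (V - P)"
      unfolding quotient_def using PV by auto
    also have "(\<lambda>x. E\<^sup>* `` {x}) ` P = {P}" using c2 Pne by auto
    also have "(\<lambda>x. E\<^sup>* `` {x}) ` (V - P) = (V - P) // Er\<^sup>*"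
      unfolding quotient_def using c1 by auto
    finally show ?thesis by simp
  qed
  have nin: "P \<notin> (V - P) // Er\<^sup>*"
  proof
    assume "P \<in> (V - P) // Er\<^sup>*"
    then obtain x where "x \<in> V - P" "P = Er\<^sup>* `` {x}" unfolding quotient_def by auto
    then show False by auto
  qed
  have "finite ((V - P) // Er\<^sup>*)" using fin by (simp add: quotient_def)
  then show ?thesis using q nin unfolding Er_def by simp
qed

lemma quot_ne: "V \<noteq> {} \<Longrightarrow> V // r \<noteq> {}"
  unfolding quotient_def by auto

lemma quot_card_ge1: "finite V \<Longrightarrow> V \<noteq> {} \<Longrightarrow> 1 \<le> card (V // r)"
  using quot_ne[of V r] by (simp add: quotient_def Suc_le_eq card_gt_0_iff)

lemma quot_classes_disj:
  assumes "sym E" "X \<in> V // E\<^sup>*" "Y \<in> V // E\<^sup>*" "X \<noteq> Y"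
  shows "X \<inter> Y = {}"
proof (rule ccontr)
  assume "X \<inter> Y \<noteq> {}"
  then obtain z where z: "z \<in> X" "z \<in> Y" by auto
  obtain x y where x: "X = E\<^sup>* `` {x}" and y: "Y = E\<^sup>* `` {y}" using assms unfolding quotient_def by auto
  have s: "sym (E\<^sup>*)" using assms(1) by (rule sym_rtrancl)
  have "(x,z) \<in> E\<^sup>*" "(y,z) \<in> E\<^sup>*" using z x y by auto
  then have xy: "(x,y) \<in> E\<^sup>*" using s by (meson rtrancl_trans symD)
  have "E\<^sup>* `` {x} = E\<^sup>* `` {y}"
  proof
    show "E\<^sup>* `` {x} \<subseteq> E\<^sup>* `` {y}" using xy s by (auto dest: symD intro: rtrancl_trans)
    show "E\<^sup>* `` {y} \<subseteq> E\<^sup>* `` {x}" using xy s by (auto intro: rtrancl_trans)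
  qed
  then show False using assms(4) x y by simp
qed

lemma quot_sum_card:
  assumes fin: "finite V" and EV: "E \<subseteq> V \<times> V" and s: "sym E"
  shows "sum card (V // E\<^sup>*) = card V"
proof -
  have U: "\<Union> (V // E\<^sup>*) = V"
  proof
    show "\<Union> (V // E\<^sup>*) \<subseteq> V" using class_sub[OF EV] unfolding quotient_def by auto
    show "V \<subseteq> \<Union> (V // E\<^sup>*)" unfolding quotient_def by auto
  qed
  have fins: "\<forall>X\<in>V // E\<^sup>*. finite X" using class_sub[OF EV] fin unfolding quotient_def
    by (auto intro: finite_subset)
  have "pairwise disjnt (V // E\<^sup>*)"
    unfolding pairwise_def disjnt_def using quot_classes_disj[OF s] by blast
  then have "card (\<Union> (V // E\<^sup>*)) = sum card (V // E\<^sup>*)" using fins by (simp add: card_Union_disjoint)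
  then show ?thesis using U by simp
qed

lemma quot_bound4:
  assumes fin: "finite V" and EV: "E \<subseteq> V \<times> V" and s: "sym E"
    and big: "\<And>x. x \<in> V \<Longrightarrow> 4 \<le> card (E\<^sup>* `` {x})"
  shows "4 * card (V // E\<^sup>*) \<le> card V"
proof -
  have "\<forall>X\<in>V // E\<^sup>*. 4 \<le> card X" using big unfolding quotient_def by auto
  then have "of_nat (card (V // E\<^sup>*)) * (4::nat) \<le> sum card (V // E\<^sup>*)"
    by (intro sum_bounded_below) auto
  then show ?thesis using quot_sum_card[OF assms(1-3)] by simp
qed

definition Bset :: "nat \<Rightarrow> (nat \<Rightarrow> int) \<Rightarrow> nat set" where
  "Bset n \<pi> = {e \<in> {0..n}. qf n \<pi> (Suc e) \<noteq> qf n \<pi> e + 1}"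

lemma bg_adj_char:
  "(u,v) \<in> bg_adj n \<pi> \<longleftrightarrow>
     (\<exists>j\<le>2*n+1. u = unsigned_ext n \<pi> j \<and> v = unsigned_ext n \<pi> (flip j)) \<or> (u \<le> 2*n+1 \<and> v = flip u)"
proof
  assume "(u,v) \<in> bg_adj n \<pi>"
  then obtain i where i: "i \<le> n" and
    h: "{u,v} = {unsigned_ext n \<pi> (2*i), unsigned_ext n \<pi> (2*i+1)} \<or> {u,v} = {2*i, 2*i+1}"
    unfolding bg_adj_def by auto
  have f1: "flip (2*i) = 2*i+1" "flip (2*i+1) = 2*i" unfolding flip_def by auto
  from h show "(\<exists>j\<le>2*n+1. u = unsigned_ext n \<pi> j \<and> v = unsigned_ext n \<pi> (flip j)) \<or> (u \<le> 2*n+1 \<and> v = flip u)"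
  proof
    assume "{u,v} = {unsigned_ext n \<pi> (2*i), unsigned_ext n \<pi> (2*i+1)}"
    then have "(u = unsigned_ext n \<pi> (2*i) \<and> v = unsigned_ext n \<pi> (2*i+1)) \<or>
               (u = unsigned_ext n \<pi> (2*i+1) \<and> v = unsigned_ext n \<pi> (2*i))" by (auto simp: doubleton_eq_iff)
    then show ?thesis
    proof
      assume "u = unsigned_ext n \<pi> (2*i) \<and> v = unsigned_ext n \<pi> (2*i+1)"
      then show ?thesis using i f1 by (intro disjI1 exI[of _ "2*i"]) auto
    next
      assume "u = unsigned_ext n \<pi> (2*i+1) \<and> v = unsigned_ext n \<pi> (2*i)"
      then show ?thesis using i f1 by (intro disjI1 exI[of _ "2*i+1"]) auto
    qed
  next
    assume "{u,v} = {2*i, 2*i+1}"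
    then show ?thesis using i f1 by (auto simp: doubleton_eq_iff)
  qed
next
  assume "(\<exists>j\<le>2*n+1. u = unsigned_ext n \<pi> j \<and> v = unsigned_ext n \<pi> (flip j)) \<or> (u \<le> 2*n+1 \<and> v = flip u)"
  then show "(u,v) \<in> bg_adj n \<pi>"
  proof
    assume "\<exists>j\<le>2*n+1. u = unsigned_ext n \<pi> j \<and> v = unsigned_ext n \<pi> (flip j)"
    then obtain j where j: "j \<le> 2*n+1" "u = unsigned_ext n \<pi> j" "v = unsigned_ext n \<pi> (flip j)" by auto
    define i where "i = j div 2"
    have i: "i \<le> n" using j unfolding i_def by auto
    have "{u,v} = {unsigned_ext n \<pi> (2*i), unsigned_ext n \<pi> (2*i+1)}"
    proof (cases "even j")
      case True
      then have "j = 2*i" "flip j = 2*i+1" unfolding i_def flip_def by auto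
      then show ?thesis using j by auto
    next
      case False
      then have "j = 2*i+1" "flip j = 2*i" unfolding i_def flip_def by auto
      then show ?thesis using j by auto
    qed
    then show ?thesis unfolding bg_adj_def using i by blast
  next
    assume a: "u \<le> 2*n+1 \<and> v = flip u"
    define i where "i = u div 2"
    have i: "i \<le> n" using a unfolding i_def by auto
    have "{u,v} = {2*i, 2*i+1}"
    proof (cases "even u")
      case True
      then show ?thesis using a unfolding i_def flip_def by auto
    next
      case False
      then have "u = 2*i+1" "v = 2*i" using a unfolding i_def flip_def by auto
      then show ?thesis by auto
    qed
    then show ?thesis unfolding bg_adj_def using i by blast
  qed
qed

lemma flip_2e: "flip (2*e) = 2*e+1" "flip (2*e+1) = 2*e" unfolding flip_def by auto

lemma adj_iff:
  assumes "e \<le> n"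
  shows "flip (unsigned_ext n \<pi> (2*e)) = unsigned_ext n \<pi> (2*e+1) \<longleftrightarrow> qf n \<pi> (Suc e) = qf n \<pi> e + 1"
proof -
  have "unsigned_ext n \<pi> (2*e) = Rv (qf n \<pi> e)" using assms by (simp add: ext_formula)
  moreover have "unsigned_ext n \<pi> (2*e+1) = Lv (qf n \<pi> (Suc e))" using assms by (simp add: ext_formula)
  ultimately show ?thesis by (auto simp: flip_Rv Lv_inj)
qed

context
  fixes n :: nat and \<pi> :: "nat \<Rightarrow> int"
  assumes sp: "signed_perm n \<pi>"
begin

lemma bg_sub: "bg_adj n \<pi> \<subseteq> {0..2*n+1} \<times> {0..2*n+1}"
proof
  fix p assume "p \<in> bg_adj n \<pi>"
  then obtain u v where p: "p = (u,v)" "(u,v) \<in> bg_adj n \<pi>" by (cases p) auto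
  then have "(\<exists>j\<le>2*n+1. u = unsigned_ext n \<pi> j \<and> v = unsigned_ext n \<pi> (flip j)) \<or> (u \<le> 2*n+1 \<and> v = flip u)"
    using bg_adj_char by blast
  then show "p \<in> {0..2*n+1} \<times> {0..2*n+1}" using p(1) ext_le[OF sp] flip_le by auto
qed

lemma bg_sym: "sym (bg_adj n \<pi>)"
proof (rule symI)
  fix u v assume "(u,v) \<in> bg_adj n \<pi>"
  then have "(\<exists>j\<le>2*n+1. u = unsigned_ext n \<pi> j \<and> v = unsigned_ext n \<pi> (flip j)) \<or> (u \<le> 2*n+1 \<and> v = flip u)"
    using bg_adj_char by blast
  then have "(\<exists>j\<le>2*n+1. v = unsigned_ext n \<pi> j \<and> u = unsigned_ext n \<pi> (flip j)) \<or> (v \<le> 2*n+1 \<and> u = flip v)"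
  proof
    assume "\<exists>j\<le>2*n+1. u = unsigned_ext n \<pi> j \<and> v = unsigned_ext n \<pi> (flip j)"
    then obtain j where "j\<le>2*n+1" "u = unsigned_ext n \<pi> j" "v = unsigned_ext n \<pi> (flip j)" by auto
    then show ?thesis using flip_le by (intro disjI1 exI[of _ "flip j"]) auto
  qed (use flip_le in auto)
  then show "(v,u) \<in> bg_adj n \<pi>" using bg_adj_char by blast
qed

lemma cyc_ge1: "1 \<le> bg_cycles n \<pi>"
  unfolding bg_cycles_def by (rule quot_card_ge1) auto

lemma ext_surj: "v \<le> 2*n+1 \<Longrightarrow> \<exists>j\<le>2*n+1. unsigned_ext n \<pi> j = v"
  using ext_bij[OF sp] unfolding bij_betw_def by (metis atLeastAtMost_iff imageE le0)

lemma full_noadj: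
  assumes full: "Bset n \<pi> = {0..n}" and j: "j \<le> 2*n+1"
  shows "unsigned_ext n \<pi> (flip j) \<noteq> flip (unsigned_ext n \<pi> j)"
proof
  assume a: "unsigned_ext n \<pi> (flip j) = flip (unsigned_ext n \<pi> j)"
  define e where "e = j div 2"
  have e: "e \<le> n" using j unfolding e_def by auto
  have "flip (unsigned_ext n \<pi> (2*e)) = unsigned_ext n \<pi> (2*e+1)"
  proof (cases "even j")
    case True
    then have "j = 2*e" "flip j = 2*e+1" unfolding e_def flip_def by auto
    then show ?thesis using a by simp
  next
    case False
    then have "j = 2*e+1" "flip j = 2*e" unfolding e_def flip_def by auto
    then show ?thesis using a by (metis flip_flip)
  qed
  then have "qf n \<pi> (Suc e) = qf n \<pi> e + 1" using adj_iff e by blast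
  then have "e \<notin> Bset n \<pi>" unfolding Bset_def by auto
  then show False using full e by auto
qed

lemma full_class4:
  assumes full: "Bset n \<pi> = {0..n}" and x: "x \<in> {0..2*n+1}"
  shows "4 \<le> card ((bg_adj n \<pi>)\<^sup>* `` {x})"
proof -
  let ?E = "bg_adj n \<pi>" and ?ext = "unsigned_ext n \<pi>"
  obtain j where j: "j \<le> 2*n+1" "?ext j = x" using ext_surj x by auto
  have fx: "flip x \<le> 2*n+1" using x flip_le by auto
  obtain j' where j': "j' \<le> 2*n+1" "?ext j' = flip x" using ext_surj fx by auto
  have fj: "flip j \<le> 2*n+1" "flip j' \<le> 2*n+1" using j j' flip_le by auto
  have e1: "(x, ?ext (flip j)) \<in> ?E" unfolding bg_adj_char using j by (intro disjI1 exI[of _ j]) auto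
  have e2: "(x, flip x) \<in> ?E" unfolding bg_adj_char using x by auto
  have e3: "(flip x, ?ext (flip j')) \<in> ?E" unfolding bg_adj_char using j' by (intro disjI1 exI[of _ j']) auto
  have sub: "{x, flip x, ?ext (flip j), ?ext (flip j')} \<subseteq> ?E\<^sup>* `` {x}"
    using e1 e2 e3 by (auto intro: rtrancl_into_rtrancl)
  have inj: "\<And>a b. a \<le> 2*n+1 \<Longrightarrow> b \<le> 2*n+1 \<Longrightarrow> ?ext a = ?ext b \<Longrightarrow> a = b" using ext_inj[OF sp] by blast
  have d1: "x \<noteq> flip x" using flip_neq by metis
  have d2: "x \<noteq> ?ext (flip j)" using inj[of j "flip j"] j fj flip_neq by metis
  have d3: "x \<noteq> ?ext (flip j')"
  proof
    assume "x = ?ext (flip j')"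
    then have "flip j' = j" using inj j fj by metis
    then have "?ext (flip j) = flip x" using j' by (metis flip_flip)
    then show False using full_noadj[OF full j(1)] j by simp
  qed
  have d4: "flip x \<noteq> ?ext (flip j)" using full_noadj[OF full j(1)] j by metis
  have d5: "flip x \<noteq> ?ext (flip j')" using inj[of j' "flip j'"] j' fj flip_neq by metis
  have d6: "?ext (flip j) \<noteq> ?ext (flip j')"
  proof
    assume "?ext (flip j) = ?ext (flip j')"
    then have "flip j = flip j'" using inj fj by metis
    then have "j = j'" by (metis flip_flip)
    then show False using j j' d1 by simp
  qed
  have "card {x, flip x, ?ext (flip j), ?ext (flip j')} = 4" using d1 d2 d3 d4 d5 d6 by simp
  moreover have "finite (?E\<^sup>* `` {x})"
    using class_sub[OF bg_sub x] by (rule finite_subset) simp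
  ultimately show ?thesis using sub by (metis card_mono)
qed

lemma full_bound: "Bset n \<pi> = {0..n} \<Longrightarrow> 4 * bg_cycles n \<pi> \<le> 2*n+2"
  unfolding bg_cycles_def using quot_bound4[OF _ bg_sub bg_sym] full_class4 by simp

end

definition shr :: "int \<Rightarrow> int \<Rightarrow> int" where "shr a x = (if \<bar>x\<bar> > a then x - sgn x else x)"
definition grw :: "int \<Rightarrow> int \<Rightarrow> int" where "grw a x = (if \<bar>x\<bar> \<ge> a then x + sgn x else x)"
definition del :: "nat \<Rightarrow> nat \<Rightarrow> (nat \<Rightarrow> int) \<Rightarrow> nat \<Rightarrow> int" where
  "del n p \<pi> i = (if 1 \<le> i \<and> i \<le> n - 1 then shr \<bar>\<pi> p\<bar> (\<pi> (if i < p then i else Suc i)) else 0)"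
definition ins :: "nat \<Rightarrow> nat \<Rightarrow> int \<Rightarrow> (nat \<Rightarrow> int) \<Rightarrow> nat \<Rightarrow> int" where
  "ins n p s \<pi> i = (if 1 \<le> i \<and> i \<le> n then (if i < p then grw \<bar>s\<bar> (\<pi> i) else if i = p then s
      else grw \<bar>s\<bar> (\<pi> (i - 1))) else 0)"

lemma abs_shr: "a \<ge> 0 \<Longrightarrow> \<bar>shr a x\<bar> = (if \<bar>x\<bar> > a then \<bar>x\<bar> - 1 else \<bar>x\<bar>)"
  unfolding shr_def by (auto simp: sgn_if)
lemma abs_grw: "a \<ge> 1 \<Longrightarrow> \<bar>grw a x\<bar> = (if \<bar>x\<bar> \<ge> a then \<bar>x\<bar> + 1 else \<bar>x\<bar>)"
  unfolding grw_def by (auto simp: sgn_if)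
lemma shr_grw: "a \<ge> 1 \<Longrightarrow> shr a (grw a x) = x"
  unfolding shr_def grw_def by (auto simp: sgn_if)
lemma grw_shr: "a \<ge> 1 \<Longrightarrow> \<bar>x\<bar> \<noteq> a \<Longrightarrow> grw a (shr a x) = x"
  unfolding shr_def grw_def by (auto simp: sgn_if)

lemma sp_intro:
  assumes z: "\<And>i. i \<notin> {1..n} \<Longrightarrow> \<pi> i = 0"
    and r: "\<And>i. i \<in> {1..n} \<Longrightarrow> \<pi> i \<noteq> 0 \<and> \<bar>\<pi> i\<bar> \<le> int n"
    and inj: "\<And>i i'. i \<in> {1..n} \<Longrightarrow> i' \<in> {1..n} \<Longrightarrow> \<bar>\<pi> i\<bar> = \<bar>\<pi> i'\<bar> \<Longrightarrow> i = i'"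
  shows "signed_perm n \<pi>"
proof -
  let ?f = "\<lambda>i. nat \<bar>\<pi> i\<bar>"
  have i: "inj_on ?f {1..n}"
  proof (rule inj_onI)
    fix i i' assume a: "i \<in> {1..n}" "i' \<in> {1..n}" "?f i = ?f i'"
    then have "\<bar>\<pi> i\<bar> = \<bar>\<pi> i'\<bar>" by simp
    then show "i = i'" using inj a by blast
  qed
  have s: "?f ` {1..n} \<subseteq> {1..n}"
  proof
    fix v assume "v \<in> ?f ` {1..n}"
    then obtain i where "i \<in> {1..n}" "v = ?f i" by auto
    then show "v \<in> {1..n}" using r[of i] by auto
  qed
  have "card (?f ` {1..n}) = card {1..n}" using i by (simp add: card_image)
  then have "?f ` {1..n} = {1..n}" using s by (simp add: card_subset_eq)
  then show ?thesis unfolding signed_perm_def bij_betw_def using i z by auto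
qed

context
  fixes n p :: nat and \<pi> :: "nat \<Rightarrow> int"
  assumes sp: "signed_perm n \<pi>" and p: "p \<in> {1..n}"
begin

definition "idx i = (if i < p then i else Suc i)"

lemma idx_in: "i \<in> {1..n-1} \<Longrightarrow> idx i \<in> {1..n} \<and> idx i \<noteq> p"
  unfolding idx_def using p by auto

lemma idx_inj: "idx i = idx i' \<Longrightarrow> i = i'"
  unfolding idx_def by (auto split: if_splits)

lemma del_sp: "signed_perm (n-1) (del n p \<pi>)"
proof (rule sp_intro)
  let ?a = "\<bar>\<pi> p\<bar>"
  have a1: "1 \<le> ?a" using sp_nz[OF sp p] by auto
  have dv: "i \<in> {1..n-1} \<Longrightarrow> del n p \<pi> i = shr ?a (\<pi> (idx i))" for i unfolding del_def idx_def by auto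
  have props: "\<pi> (idx i) \<noteq> 0 \<and> \<bar>\<pi> (idx i)\<bar> \<le> int n \<and> \<bar>\<pi> (idx i)\<bar> \<noteq> ?a" if i: "i \<in> {1..n-1}" for i
  proof -
    have "idx i \<in> {1..n}" "idx i \<noteq> p" using idx_in i by auto
    then show ?thesis using sp_nz[OF sp] sp_le[OF sp] sp_absinj[OF sp _ p] by blast
  qed
  show "\<And>i. i \<notin> {1..n-1} \<Longrightarrow> del n p \<pi> i = 0" unfolding del_def by auto
  show "del n p \<pi> i \<noteq> 0 \<and> \<bar>del n p \<pi> i\<bar> \<le> int (n-1)" if i: "i \<in> {1..n-1}" for i
  proof -
    have "?a \<le> int n" using sp_le[OF sp p] .
    then show ?thesis using props[OF i] dv[OF i] a1 abs_shr[of ?a "\<pi> (idx i)"] i by (auto split: if_splits)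
  qed
  show "i = i'" if i: "i \<in> {1..n-1}" "i' \<in> {1..n-1}" "\<bar>del n p \<pi> i\<bar> = \<bar>del n p \<pi> i'\<bar>" for i i'
  proof -
    have "\<bar>\<pi> (idx i)\<bar> = \<bar>\<pi> (idx i')\<bar>"
      using props[OF i(1)] props[OF i(2)] i(3) dv[OF i(1)] dv[OF i(2)] a1
        abs_shr[of ?a "\<pi> (idx i)"] abs_shr[of ?a "\<pi> (idx i')"] by (auto split: if_splits)
    then have "idx i = idx i'" using sp_absinj[OF sp] idx_in i by blast
    then show ?thesis by (rule idx_inj)
  qed
qed

lemma ins_del: "ins n p (\<pi> p) (del n p \<pi>) = \<pi>"
proof
  fix i
  let ?a = "\<bar>\<pi> p\<bar>"
  have a1: "1 \<le> ?a" using sp_nz[OF sp p] by auto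
  consider "i \<notin> {1..n}" | "i \<in> {1..n}" "i < p" | "i = p" | "i \<in> {1..n}" "i > p" by fastforce
  then show "ins n p (\<pi> p) (del n p \<pi>) i = \<pi> i"
  proof cases
    case 1 then show ?thesis unfolding ins_def using sp_zero[OF sp] by auto
  next
    case 2
    then have "del n p \<pi> i = shr ?a (\<pi> i)" "\<bar>\<pi> i\<bar> \<noteq> ?a" using p sp_absinj[OF sp _ p, of i] unfolding del_def by auto
    then show ?thesis unfolding ins_def using 2 a1 grw_shr by auto
  next
    case 3 then show ?thesis unfolding ins_def using p by auto
  next
    case 4
    then have "del n p \<pi> (i-1) = shr ?a (\<pi> i)" "\<bar>\<pi> i\<bar> \<noteq> ?a" using p sp_absinj[OF sp _ p, of i] unfolding del_def by auto
    then show ?thesis unfolding ins_def using 4 a1 grw_shr by auto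
  qed
qed

lemma qf_del: "i \<le> n \<Longrightarrow> qf (n-1) (del n p \<pi>) i = shr \<bar>\<pi> p\<bar> (qf n \<pi> (if i < p then i else Suc i))"
proof -
  assume i: "i \<le> n"
  have a: "\<bar>\<pi> p\<bar> \<le> int n" "0 \<le> \<bar>\<pi> p\<bar>" using sp_le[OF sp p] by auto
  consider "i = 0" | "i = n" | "1 \<le> i" "i \<le> n - 1" using i by fastforce
  then show ?thesis
  proof cases
    case 1 then show ?thesis using p unfolding qf_def shr_def by auto
  next
    case 2 then show ?thesis using p a unfolding qf_def shr_def by auto
  next
    case 3 then show ?thesis using p unfolding qf_def del_def by auto
  qed
qed

end

context
  fixes n p :: nat and \<pi> :: "nat \<Rightarrow> int" and s :: int
  assumes sp: "signed_perm (n-1) \<pi>" and p: "p \<in> {1..n}" and s: "s \<noteq> 0" "\<bar>s\<bar> \<le> int n"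
begin

lemma ins_sp: "signed_perm n (ins n p s \<pi>)"
proof (rule sp_intro)
  let ?b = "\<bar>s\<bar>"
  have b1: "1 \<le> ?b" using s by auto
  define jdx where "jdx i = (if i < p then i else i - 1)" for i
  have jv: "i \<in> {1..n} \<Longrightarrow> i \<noteq> p \<Longrightarrow> ins n p s \<pi> i = grw ?b (\<pi> (jdx i)) \<and> jdx i \<in> {1..n-1}" for i
    unfolding ins_def jdx_def using p by auto
  have jinj: "i \<noteq> p \<Longrightarrow> i' \<noteq> p \<Longrightarrow> jdx i = jdx i' \<Longrightarrow> i = i'" for i i'
    unfolding jdx_def using p by (auto split: if_splits)
  have gv: "y \<noteq> 0 \<Longrightarrow> \<bar>y\<bar> \<le> int (n-1) \<Longrightarrow> grw ?b y \<noteq> 0 \<and> \<bar>grw ?b y\<bar> \<le> int n \<and> \<bar>grw ?b y\<bar> \<noteq> ?b" for y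
    using abs_grw[OF b1, of y] p by (auto split: if_splits)
  show "\<And>i. i \<notin> {1..n} \<Longrightarrow> ins n p s \<pi> i = 0" unfolding ins_def by auto
  show "ins n p s \<pi> i \<noteq> 0 \<and> \<bar>ins n p s \<pi> i\<bar> \<le> int n" if i: "i \<in> {1..n}" for i
  proof (cases "i = p")
    case True then show ?thesis using s unfolding ins_def using p by auto
  next
    case False
    then show ?thesis using jv[OF i False] gv sp_nz[OF sp] sp_le[OF sp] by metis
  qed
  show "i = i'" if i: "i \<in> {1..n}" "i' \<in> {1..n}" "\<bar>ins n p s \<pi> i\<bar> = \<bar>ins n p s \<pi> i'\<bar>" for i i'
  proof (cases "i = p"; cases "i' = p")
    assume "i = p" "i' = p" then show ?thesis by simp
  next
    assume a: "i = p" "i' \<noteq> p"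
    then have "ins n p s \<pi> i = s" unfolding ins_def using p by auto
    then show ?thesis using jv[OF i(2) a(2)] gv sp_nz[OF sp] sp_le[OF sp] i(3) by metis
  next
    assume a: "i \<noteq> p" "i' = p"
    then have "ins n p s \<pi> i' = s" unfolding ins_def using p by auto
    then show ?thesis using jv[OF i(1) a(1)] gv sp_nz[OF sp] sp_le[OF sp] i(3) by metis
  next
    assume a: "i \<noteq> p" "i' \<noteq> p"
    have j1: "jdx i \<in> {1..n-1}" "jdx i' \<in> {1..n-1}" using jv i a by auto
    have "\<bar>\<pi> (jdx i)\<bar> = \<bar>\<pi> (jdx i')\<bar>"
      using jv[OF i(1) a(1)] jv[OF i(2) a(2)] i(3) abs_grw[OF b1, of "\<pi> (jdx i)"] abs_grw[OF b1, of "\<pi> (jdx i')"]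
      by (auto split: if_splits)
    then have "jdx i = jdx i'" using sp_absinj[OF sp] j1 by blast
    then show ?thesis using jinj a by blast
  qed
qed

lemma del_ins: "del n p (ins n p s \<pi>) = \<pi>"
proof
  fix i
  have b1: "1 \<le> \<bar>s\<bar>" using s by auto
  have sp': "ins n p s \<pi> p = s" unfolding ins_def using p by auto
  show "del n p (ins n p s \<pi>) i = \<pi> i"
  proof (cases "1 \<le> i \<and> i \<le> n - 1")
    case True
    then show ?thesis unfolding del_def sp' using p b1 shr_grw by (auto simp: ins_def)
  next
    case False then show ?thesis unfolding del_def using sp_zero[OF sp] by auto
  qed
qed

lemma qf_ins: "i \<le> n+1 \<Longrightarrow> qf n (ins n p s \<pi>) i =
    (if i < p then grw \<bar>s\<bar> (qf (n-1) \<pi> i) else if i = p then s else grw \<bar>s\<bar> (qf (n-1) \<pi> (i-1)))"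
proof -
  assume i: "i \<le> n+1"
  have n1: "n \<ge> 1" using p by auto
  consider "i = 0" | "i = n+1" | "1 \<le> i" "i \<le> n" using i by fastforce
  then show ?thesis
  proof cases
    case 1 then show ?thesis using p unfolding qf_def grw_def by auto
  next
    case 2 then show ?thesis using p s n1 unfolding qf_def grw_def by auto
  next
    case 3 then show ?thesis using p n1 unfolding qf_def ins_def by auto
  qed
qed

end

definition phi :: "nat \<Rightarrow> nat \<Rightarrow> nat" where "phi k v = (if v < 2*k then v else v - 2)"

lemma phi_int: "v \<noteq> 2*k \<Longrightarrow> v \<noteq> 2*k+1 \<Longrightarrow> int (phi k v) = (if int v < 2 * int k then int v else int v - 2)"
  unfolding phi_def by auto

lemma GR:
  assumes "a \<ge> 1" "int k = a - 1 \<or> int k = a" "\<bar>x\<bar> \<noteq> a" "Rv x \<noteq> 2*k" "Rv x \<noteq> 2*k+1"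
  shows "Rv (shr a x) = phi k (Rv x)"
proof -
  have h1: "int (Rv x) = (if x \<ge> 0 then 2*x else -2*x - 1)" by (rule Rv_int)
  have h2: "int (Rv (shr a x)) = (if shr a x \<ge> 0 then 2*shr a x else -2*shr a x - 1)" by (rule Rv_int)
  have h3: "shr a x = (if \<bar>x\<bar> > a then x - sgn x else x)" by (rule shr_def)
  have h4: "int (phi k (Rv x)) = (if int (Rv x) < 2 * int k then int (Rv x) else int (Rv x) - 2)"
    using assms(4,5) by (rule phi_int)
  have h5: "int (Rv x) \<noteq> 2 * int k" "int (Rv x) \<noteq> 2 * int k + 1" using assms(4,5) by linarith+
  have "int (Rv (shr a x)) = int (phi k (Rv x))"
    unfolding h4 h3 using h1 h5 assms(1-3) by (auto simp: sgn_if Rv_int split: if_splits)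
  then show ?thesis by simp
qed

lemma GL:
  assumes "a \<ge> 1" "int k = a - 1 \<or> int k = a" "\<bar>x\<bar> \<noteq> a" "Lv x \<noteq> 2*k" "Lv x \<noteq> 2*k+1"
  shows "Lv (shr a x) = phi k (Lv x)"
proof -
  have "shr a (-x) = - shr a x" unfolding shr_def by (auto simp: sgn_if)
  then show ?thesis using GR[of a k "-x"] assms unfolding Lv_Rv by auto
qed

lemma mergeA:
  assumes "y \<noteq> 0" "x + 1 = y"
  shows "Rv (shr \<bar>y\<bar> x) = phi (Rv x div 2) (Rv y)"
proof -
  have "int (Rv (shr \<bar>y\<bar> x)) = int (phi (Rv x div 2) (Rv y))"
  proof (cases "y > 0")
    case True
    then have "Rv x = 2 * nat x" "Rv y = 2 * nat y" "shr \<bar>y\<bar> x = x" using assms unfolding Rv_def shr_def by auto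
    then show ?thesis using True assms unfolding phi_def by auto
  next
    case False
    then have "Rv x = 2 * nat (-x) - 1" "Rv y = 2 * nat (-y) - 1" "shr \<bar>y\<bar> x = y" using assms unfolding Rv_def shr_def
      by (auto simp: sgn_if)
    then show ?thesis using False assms unfolding phi_def by auto
  qed
  then show ?thesis by simp
qed

lemma kval:
  assumes "y \<noteq> 0" "x + 1 = y \<or> (x = y \<and> y > 0)"
  shows "int (Rv x div 2) = \<bar>y\<bar> - 1 \<or> int (Rv x div 2) = \<bar>y\<bar>"
  using assms unfolding Rv_def by (auto simp: nat_mult_distrib)

definition ppf :: "nat \<Rightarrow> nat \<Rightarrow> nat" where "ppf n e = (if e < n then Suc e else n)"
definition gshf :: "nat \<Rightarrow> nat \<Rightarrow> nat" where "gshf e x = (if x < e then x else x - 1)"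

locale contr =
  fixes n e :: nat and \<pi> :: "nat \<Rightarrow> int"
  assumes sp: "signed_perm n \<pi>" and n1: "1 \<le> n" and e: "e \<le> n"
    and adj: "qf n \<pi> (Suc e) = qf n \<pi> e + 1"
begin

abbreviation "pp \<equiv> ppf n e"
lemma pp_def: "pp = (if e < n then Suc e else n)" by (simp add: ppf_def)
definition "a = \<bar>\<pi> pp\<bar>"
definition "k = Rv (qf n \<pi> e) div 2"
definition "fe j = (if j < 2*e then j else j - 2)"
abbreviation "ext \<equiv> unsigned_ext n \<pi>"
abbreviation "Q \<equiv> qf n \<pi>"

lemma pp_in: "pp \<in> {1..n}" unfolding pp_def using e n1 by auto
lemma e_pp: "e \<le> pp" "pp \<le> Suc e" unfolding pp_def using e by auto

lemma Qpp: "Q pp = \<pi> pp" using pp_in unfolding qf_def by auto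

lemma adj_rel: "(e < n \<and> pp = Suc e \<and> Q e + 1 = \<pi> pp) \<or> (e = n \<and> pp = n \<and> Q e = \<pi> pp \<and> \<pi> pp > 0)"
proof (cases "e < n")
  case True then show ?thesis using adj Qpp unfolding pp_def by auto
next
  case False
  then have "e = n" using e by auto
  then have "Q e = int n" using adj unfolding qf_def by auto
  then show ?thesis using \<open>e = n\<close> n1 unfolding pp_def qf_def by auto
qed

lemma pinz: "\<pi> pp \<noteq> 0" using sp_nz[OF sp pp_in] .
lemma a1: "a \<ge> 1" unfolding a_def using pinz by auto
lemma kv: "int k = a - 1 \<or> int k = a"
  unfolding k_def a_def using kval[OF pinz, of "Q e"] adj_rel by auto

lemma ext2e: "ext (2*e) = Rv (Q e)" "ext (2*e+1) = flip (Rv (Q e))"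
proof -
  show "ext (2*e) = Rv (Q e)" using e by (simp add: ext_formula)
  have "flip (ext (2*e)) = ext (2*e+1)" using adj_iff[OF e] adj by blast
  then show "ext (2*e+1) = flip (Rv (Q e))" using e by (simp add: ext_formula)
qed

lemma pair: "{ext (2*e), ext (2*e+1)} = {2*k, 2*k+1}"
  unfolding ext2e k_def flip_def by auto

lemma notP: "j \<le> 2*n+1 \<Longrightarrow> j \<noteq> 2*e \<Longrightarrow> j \<noteq> 2*e+1 \<Longrightarrow> ext j \<noteq> 2*k \<and> ext j \<noteq> 2*k+1"
proof -
  assume j: "j \<le> 2*n+1" "j \<noteq> 2*e" "j \<noteq> 2*e+1"
  have "ext j \<noteq> ext (2*e)" "ext j \<noteq> ext (2*e+1)" using ext_inj[OF sp] j e by fastforce+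
  then show ?thesis using pair by (auto simp: doubleton_eq_iff)
qed

lemma Qneq: "i \<le> n+1 \<Longrightarrow> i \<noteq> pp \<Longrightarrow> \<bar>Q i\<bar> \<noteq> a"
  unfolding a_def using Q_abs_inj[OF sp, of i pp] pp_in Qpp by auto

abbreviation "\<pi>' \<equiv> del n pp \<pi>"
abbreviation "ext' \<equiv> unsigned_ext (n-1) \<pi>'"

lemma Q': "i \<le> n \<Longrightarrow> qf (n-1) \<pi>' i = shr a (Q (if i < pp then i else Suc i))"
  unfolding a_def using qf_del[OF sp pp_in] by blast

lemma CL:
  assumes j: "j \<le> 2*n+1" "j \<noteq> 2*e" "j \<noteq> 2*e+1"
  shows "ext' (fe j) = phi k (ext j)"
proof -
  have np: "ext j \<noteq> 2*k \<and> ext j \<noteq> 2*k+1" using notP j by blast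
  have fj: "fe j \<le> 2*(n-1)+1" unfolding fe_def using j e n1 by auto
  consider "even j" "j < 2*e" | "odd j" "j < 2*e" | "even j" "j > 2*e+1" | "odd j" "j > 2*e+1"
    using j by fastforce
  then show ?thesis
  proof cases
    case 1
    define i where "i = j div 2"
    have i: "i < e" "i < pp" "i \<le> n" "j = 2*i" using 1 e_pp e unfolding i_def by auto
    have "fe j = j" using 1 unfolding fe_def by auto
    then have "ext' (fe j) = Rv (shr a (Q i))" using fj 1 i Q' by (simp add: ext_formula)
    moreover have "ext j = Rv (Q i)" using j 1 i by (simp add: ext_formula)
    ultimately show ?thesis using GR[OF a1 kv Qneq] i np by auto
  next
    case 2
    define i where "i = (j+1) div 2"
    have i: "i \<le> e" "1 \<le> i" "j = 2*i - 1" using 2 e unfolding i_def by auto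
    have fe: "fe j = j" using 2 unfolding fe_def by auto
    show ?thesis
    proof (cases "i < pp")
      case True
      have "ext' (fe j) = Lv (shr a (Q i))" using fj 2 i Q'[of i] True e unfolding fe i_def by (simp add: ext_formula)
      moreover have "ext j = Lv (Q i)" using j 2 i unfolding i_def by (simp add: ext_formula)
      ultimately show ?thesis using GL[OF a1 kv Qneq] i np True e by auto
    next
      case False
      then have ie: "i = e" "e = pp" "e = n" using i e_pp adj_rel by auto
      then have pn: "\<pi> n = int n" using adj n1 unfolding qf_def by auto
      have "ext' (fe j) = Lv (qf (n-1) \<pi>' n)" using fj 2 ie unfolding fe i_def by (simp add: ext_formula)
      also have "\<dots> = Lv (shr a (Q (Suc n)))" using Q'[of n] ie by simp
      also have "\<dots> = 2*n - 1" using pn ie unfolding a_def qf_def shr_def Lv_def by (auto simp: nat_add_distrib)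
      finally have l: "ext' (fe j) = 2*n - 1" .
      have "ext j = Lv (Q n)" using j 2 ie unfolding i_def by (simp add: ext_formula)
      then have r: "ext j = 2*n - 1" using pn n1 unfolding qf_def Lv_def by auto
      have "k = n" using pn ie unfolding k_def qf_def Rv_def by auto
      then show ?thesis using l r unfolding phi_def using n1 by auto
    qed
  next
    case 3
    define i where "i = j div 2"
    have i: "i \<ge> Suc e" "j = 2*i" "i \<le> n" using 3 j unfolding i_def by auto
    have fe: "fe j = 2*(i-1)" using 3 i unfolding fe_def by auto
    show ?thesis
    proof (cases "i - 1 < pp")
      case True
      then have ie: "i = pp" "pp = Suc e" "e < n" using i e_pp adj_rel by auto
      have "ext' (fe j) = Rv (qf (n-1) \<pi>' e)" using fj fe ie by (simp add: ext_formula)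
      also have "\<dots> = Rv (shr a (Q e))" using Q'[of e] ie by simp
      also have "\<dots> = phi k (Rv (\<pi> pp))" unfolding a_def k_def using mergeA[OF pinz] adj_rel ie by auto
      finally show ?thesis using j i ie Qpp by (simp add: ext_formula)
    next
      case False
      have "ext' (fe j) = Rv (shr a (Q i))" using fj fe Q'[of "i-1"] False i by (simp add: ext_formula)
      moreover have "ext j = Rv (Q i)" using j i by (simp add: ext_formula)
      moreover have "i \<noteq> pp" using False pp_in by auto
      ultimately show ?thesis using GR[OF a1 kv Qneq] i np by auto
    qed
  next
    case 4
    define i where "i = (j+1) div 2"
    have i: "i \<ge> e + 2" "j = 2*i - 1" "i \<le> n+1" using 4 j unfolding i_def by auto
    have fe: "fe j = 2*(i-1) - 1" using 4 i unfolding fe_def by auto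
    have ip: "i - 1 \<ge> pp" "i \<noteq> pp" using i e_pp by auto
    have "ext' (fe j) = Lv (qf (n-1) \<pi>' (i-1))" using fj fe i by (simp add: ext_formula)
    also have "\<dots> = Lv (shr a (Q i))" using Q'[of "i-1"] ip i by auto
    finally have "ext' (fe j) = Lv (shr a (Q i))" .
    moreover have "ext j = Lv (Q i)" using j i by (simp add: ext_formula)
    ultimately show ?thesis using GL[OF a1 kv Qneq] i np ip by auto
  qed
qed

end

context contr begin

lemma sp': "signed_perm (n-1) \<pi>'" using del_sp[OF sp pp_in] .

lemma k_le: "k \<le> n"
proof -
  have "2*k+1 \<in> {ext (2*e), ext (2*e+1)}" using pair by auto
  moreover have "ext (2*e) \<le> 2*n+1" "ext (2*e+1) \<le> 2*n+1" using ext_le[OF sp, of "2*e"] ext_le[OF sp, of "2*e+1"] e by simp_all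
  ultimately have "2*k+1 \<le> 2*n+1" by auto
  then show ?thesis by auto
qed

lemma extP: "j \<le> 2*n+1 \<Longrightarrow> ext j \<in> {2*k, 2*k+1} \<longleftrightarrow> j \<in> {2*e, 2*e+1}"
  using notP pair by auto

lemma flipP: "flip v \<in> {2*k, 2*k+1} \<longleftrightarrow> v \<in> {2*k, 2*k+1}"
  unfolding flip_def by (auto; presburger)

lemma flipE: "flip j \<in> {2*e, 2*e+1} \<longleftrightarrow> j \<in> {2*e, 2*e+1}"
  unfolding flip_def by (auto; presburger)

lemma phi_flip: "v \<notin> {2*k, 2*k+1} \<Longrightarrow> phi k (flip v) = flip (phi k v)"
  unfolding phi_def flip_def by auto

lemma fe_flip: "j \<notin> {2*e, 2*e+1} \<Longrightarrow> fe (flip j) = flip (fe j)"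
  unfolding fe_def flip_def by auto

lemma phi_inj: "u \<notin> {2*k, 2*k+1} \<Longrightarrow> v \<notin> {2*k, 2*k+1} \<Longrightarrow> phi k u = phi k v \<Longrightarrow> u = v"
  unfolding phi_def by (auto split: if_splits)

lemma phi_bij: "bij_betw (phi k) ({0..2*n+1} - {2*k, 2*k+1}) {0..2*(n-1)+1}"
proof (rule bij_betw_imageI)
  show "inj_on (phi k) ({0..2*n+1} - {2*k, 2*k+1})" by (rule inj_onI) (use phi_inj in blast)
  show "phi k ` ({0..2*n+1} - {2*k, 2*k+1}) = {0..2*(n-1)+1}"
  proof
    show "phi k ` ({0..2*n+1} - {2*k, 2*k+1}) \<subseteq> {0..2*(n-1)+1}"
      using k_le n1 unfolding phi_def by auto
    show "{0..2*(n-1)+1} \<subseteq> phi k ` ({0..2*n+1} - {2*k, 2*k+1})"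
    proof
      fix w assume w: "w \<in> {0..2*(n-1)+1}"
      show "w \<in> phi k ` ({0..2*n+1} - {2*k, 2*k+1})"
      proof (cases "w < 2*k")
        case True then show ?thesis using w n1 unfolding phi_def by (intro image_eqI[of _ _ w]) auto
      next
        case False then show ?thesis using w n1 unfolding phi_def by (intro image_eqI[of _ _ "w+2"]) auto
      qed
    qed
  qed
qed

lemma fe_surj: "j' \<le> 2*(n-1)+1 \<Longrightarrow> \<exists>j. j \<le> 2*n+1 \<and> j \<notin> {2*e, 2*e+1} \<and> fe j = j'"
proof -
  assume j': "j' \<le> 2*(n-1)+1"
  show ?thesis
  proof (cases "j' < 2*e")
    case True then show ?thesis using j' n1 unfolding fe_def by (intro exI[of _ j']) auto
  next
    case False then show ?thesis using j' n1 unfolding fe_def by (intro exI[of _ "j'+2"]) auto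
  qed
qed

lemma fe_le: "j \<le> 2*n+1 \<Longrightarrow> j \<notin> {2*e, 2*e+1} \<Longrightarrow> fe j \<le> 2*(n-1)+1"
  unfolding fe_def using e n1 by auto

lemma rel_iso:
  assumes x: "x \<in> {0..2*n+1} - {2*k, 2*k+1}" and y: "y \<in> {0..2*n+1} - {2*k, 2*k+1}"
  shows "(x,y) \<in> bg_adj n \<pi> \<longleftrightarrow> (phi k x, phi k y) \<in> bg_adj (n-1) \<pi>'"
proof
  assume "(x,y) \<in> bg_adj n \<pi>"
  then have "(\<exists>j\<le>2*n+1. x = ext j \<and> y = ext (flip j)) \<or> (x \<le> 2*n+1 \<and> y = flip x)"
    using bg_adj_char by blast
  then show "(phi k x, phi k y) \<in> bg_adj (n-1) \<pi>'"
  proof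
    assume "\<exists>j\<le>2*n+1. x = ext j \<and> y = ext (flip j)"
    then obtain j where j: "j \<le> 2*n+1" "x = ext j" "y = ext (flip j)" by blast
    have jn: "j \<notin> {2*e, 2*e+1}" using extP j x by blast
    then have fjn: "flip j \<notin> {2*e, 2*e+1}" using flipE by blast
    have fjl: "flip j \<le> 2*n+1" using flip_le j by blast
    have "phi k x = ext' (fe j)" using CL j jn by auto
    moreover have "phi k y = ext' (flip (fe j))" using CL[OF fjl] fjn j fe_flip[OF jn] by auto
    moreover have "fe j \<le> 2*(n-1)+1" using fe_le j jn by blast
    ultimately show ?thesis unfolding bg_adj_char by blast
  next
    assume "x \<le> 2*n+1 \<and> y = flip x"
    then have "phi k y = flip (phi k x)" using phi_flip x by auto
    moreover have "phi k x \<le> 2*(n-1)+1" using phi_bij x unfolding bij_betw_def by auto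
    ultimately show ?thesis unfolding bg_adj_char by blast
  qed
next
  assume "(phi k x, phi k y) \<in> bg_adj (n-1) \<pi>'"
  then have "(\<exists>j\<le>2*(n-1)+1. phi k x = ext' j \<and> phi k y = ext' (flip j)) \<or> (phi k x \<le> 2*(n-1)+1 \<and> phi k y = flip (phi k x))"
    using bg_adj_char by blast
  then show "(x,y) \<in> bg_adj n \<pi>"
  proof
    assume "\<exists>j\<le>2*(n-1)+1. phi k x = ext' j \<and> phi k y = ext' (flip j)"
    then obtain j' where j': "j' \<le> 2*(n-1)+1" "phi k x = ext' j'" "phi k y = ext' (flip j')" by blast
    obtain j where j: "j \<le> 2*n+1" "j \<notin> {2*e, 2*e+1}" "fe j = j'" using fe_surj j'(1) by blast
    have fjn: "flip j \<notin> {2*e, 2*e+1}" using flipE j by blast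
    have fjl: "flip j \<le> 2*n+1" using flip_le j by blast
    have "phi k x = phi k (ext j)" using j' j CL by auto
    then have ex: "x = ext j" using phi_inj x extP j by blast
    have "phi k y = ext' (fe (flip j))" using j' j fe_flip by auto
    also have "\<dots> = phi k (ext (flip j))" using CL[OF fjl] fjn by auto
    finally have ey: "y = ext (flip j)" using phi_inj y extP[OF fjl] fjn by blast
    show ?thesis unfolding bg_adj_char using ex ey j by blast
  next
    assume a: "phi k x \<le> 2*(n-1)+1 \<and> phi k y = flip (phi k x)"
    have fx: "flip x \<notin> {2*k, 2*k+1}" using flipP x by blast
    have "phi k y = phi k (flip x)" using a phi_flip x by auto
    then have "y = flip x" using phi_inj y fx by blast
    then show ?thesis unfolding bg_adj_char using x by auto
  qed
qed

lemma cyc_contr: "bg_cycles n \<pi> = bg_cycles (n-1) \<pi>' + 1"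
proof -
  let ?V = "{0..2*n+1}" and ?P = "{2*k, 2*k+1}" and ?E = "bg_adj n \<pi>"
  have PV: "?P \<subseteq> ?V" using k_le by auto
  have cl: "x \<in> ?P \<longleftrightarrow> y \<in> ?P" if xy: "(x,y) \<in> ?E" for x y
  proof -
    have "(\<exists>j\<le>2*n+1. x = ext j \<and> y = ext (flip j)) \<or> (x \<le> 2*n+1 \<and> y = flip x)"
      using bg_adj_char xy by blast
    then show ?thesis
    proof
      assume "\<exists>j\<le>2*n+1. x = ext j \<and> y = ext (flip j)"
      then obtain j where j: "j \<le> 2*n+1" "x = ext j" "y = ext (flip j)" by blast
      have A: "x \<in> ?P \<longleftrightarrow> j \<in> {2*e, 2*e+1}" using extP[OF j(1)] j(2) by simp
      have B: "y \<in> ?P \<longleftrightarrow> flip j \<in> {2*e, 2*e+1}" using extP[OF flip_le[OF j(1)]] j(3) by simp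
      show ?thesis using A B flipE[of j] by simp
    next
      assume "x \<le> 2*n+1 \<and> y = flip x"
      then show ?thesis using flipP[of x] by simp
    qed
  qed
  have g: "(2*k, 2*k+1) \<in> ?E" "(2*k+1, 2*k) \<in> ?E" using k_le unfolding bg_adj_char flip_def by auto
  have con: "(x,y) \<in> ?E\<^sup>*" if "x \<in> ?P" "y \<in> ?P" for x y using that g by auto
  have r1: "card (?V // ?E\<^sup>*) = card ((?V - ?P) // (?E \<inter> (?V - ?P) \<times> (?V - ?P))\<^sup>*) + 1"
    by (rule quot_card_remove[OF _ PV _ bg_sub[OF sp] cl con]) auto
  have r2: "card ((?V - ?P) // (?E \<inter> (?V - ?P) \<times> (?V - ?P))\<^sup>*) = card ({0..2*(n-1)+1} // (bg_adj (n-1) \<pi>')\<^sup>*)"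
  proof (rule quot_card_iso[OF phi_bij])
    show "?E \<inter> (?V - ?P) \<times> (?V - ?P) \<subseteq> (?V - ?P) \<times> (?V - ?P)" by blast
    show "bg_adj (n-1) \<pi>' \<subseteq> {0..2*(n-1)+1} \<times> {0..2*(n-1)+1}" using bg_sub[OF sp'] .
    show "(x,y) \<in> ?E \<inter> (?V - ?P) \<times> (?V - ?P) \<longleftrightarrow> (phi k x, phi k y) \<in> bg_adj (n-1) \<pi>'"
      if "x \<in> ?V - ?P" "y \<in> ?V - ?P" for x y using rel_iso that by blast
  qed
  show ?thesis unfolding bg_cycles_def using r1 r2 n1 by simp
qed

abbreviation "gsh \<equiv> gshf e"
lemma gsh_def: "gsh x = (if x < e then x else x - 1)" by (simp add: gshf_def)

lemma bset_contr: "Bset (n-1) \<pi>' = gsh ` Bset n \<pi>"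
proof -
  have key: "x' \<in> Bset (n-1) \<pi>' \<longleftrightarrow> x \<in> Bset n \<pi>"
    if x: "x \<le> n" "x \<noteq> e" and x': "x' = gsh x" for x x'
  proof -
    have x'n: "x' \<le> n-1" using x x' e unfolding gsh_def by auto
    have j1: "2*x \<notin> {2*e, 2*e+1}" "2*x+1 \<notin> {2*e, 2*e+1}" using x by auto
    have f1: "fe (2*x) = 2*x'" "fe (2*x+1) = 2*x'+1" using x x' unfolding fe_def gsh_def by auto
    have c1: "ext' (2*x') = phi k (ext (2*x))" using CL[of "2*x"] x j1 f1 by auto
    have c2: "ext' (2*x'+1) = phi k (ext (2*x+1))" using CL[of "2*x+1"] x j1 f1 by auto
    have n1': "ext (2*x) \<notin> {2*k, 2*k+1}" "ext (2*x+1) \<notin> {2*k, 2*k+1}" using extP j1 x by auto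
    have "x' \<in> Bset (n-1) \<pi>' \<longleftrightarrow> flip (ext' (2*x')) \<noteq> ext' (2*x'+1)"
      using adj_iff[OF x'n] x'n unfolding Bset_def by auto
    also have "\<dots> \<longleftrightarrow> phi k (flip (ext (2*x))) \<noteq> phi k (ext (2*x+1))" using c1 c2 phi_flip n1' by auto
    also have "\<dots> \<longleftrightarrow> flip (ext (2*x)) \<noteq> ext (2*x+1)"
    proof -
      have fl: "flip (ext (2*x)) \<notin> {2*k, 2*k+1}" using flipP n1'(1) by blast
      show ?thesis using phi_inj[OF fl n1'(2)] by auto
    qed
    also have "\<dots> \<longleftrightarrow> x \<in> Bset n \<pi>" using adj_iff[OF x(1)] x(1) unfolding Bset_def by auto
    finally show ?thesis .
  qed
  have eB: "e \<notin> Bset n \<pi>" using adj unfolding Bset_def by auto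
  show ?thesis
  proof
    show "Bset (n-1) \<pi>' \<subseteq> gsh ` Bset n \<pi>"
    proof
      fix x' assume a: "x' \<in> Bset (n-1) \<pi>'"
      then have x'n: "x' \<le> n-1" unfolding Bset_def by auto
      define x where "x = (if x' < e then x' else Suc x')"
      have x: "x \<le> n" "x \<noteq> e" "x' = gsh x" using x'n n1 unfolding x_def gsh_def by auto
      then have "x \<in> Bset n \<pi>" using key a by blast
      then show "x' \<in> gsh ` Bset n \<pi>" using x by auto
    qed
    show "gsh ` Bset n \<pi> \<subseteq> Bset (n-1) \<pi>'"
    proof
      fix y assume "y \<in> gsh ` Bset n \<pi>"
      then obtain x where x: "x \<in> Bset n \<pi>" "y = gsh x" by auto
      then have "x \<le> n" "x \<noteq> e" using eB unfolding Bset_def by auto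
      then show "y \<in> Bset (n-1) \<pi>'" using key x by blast
    qed
  qed
qed

end

definition sel :: "nat \<Rightarrow> nat \<Rightarrow> (nat \<Rightarrow> int) \<Rightarrow> int" where
  "sel n e \<pi>' = (if e < n then (let u = qf (n-1) \<pi>' e in if u \<ge> 0 then u + 1 else u) else int n)"

definition Aset :: "nat \<Rightarrow> nat set \<Rightarrow> (nat \<Rightarrow> int) set" where
  "Aset n B = {\<pi>. signed_perm n \<pi> \<and> Bset n \<pi> = B \<and> bg_cycles n \<pi> + 2 = n + 1}"

definition Gf :: "nat \<Rightarrow> nat" where
  "Gf b = (if b = 0 then 0 else card (Aset (b-1) {0..b-1}))"

lemma pp_simp: "ppf n e = (if e < n then Suc e else n)"
  by (simp add: ppf_def)

lemma gsh_simp: "gshf e x = (if x < e then x else x - 1)"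
  by (simp add: gshf_def)

lemma recon:
  assumes sp: "signed_perm (n-1) \<pi>'" and n1: "1 \<le> n" and e: "e \<le> n"
  defines "\<pi> \<equiv> ins n (ppf n e) (sel n e \<pi>') \<pi>'"
  shows "signed_perm n \<pi>" "qf n \<pi> (Suc e) = qf n \<pi> e + 1" "del n (ppf n e) \<pi> = \<pi>'"
proof -
  let ?p = "ppf n e" and ?s = "sel n e \<pi>'"
  have p: "?p \<in> {1..n}" using n1 e unfolding pp_simp by auto
  have s: "?s \<noteq> 0 \<and> \<bar>?s\<bar> \<le> int n"
  proof (cases "e < n")
    case True
    then have "\<bar>qf (n-1) \<pi>' e\<bar> \<le> int (n-1)" using Q_le[OF sp] by auto
    then show ?thesis using True n1 unfolding sel_def Let_def by auto
  next
    case False then show ?thesis using n1 unfolding sel_def by auto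
  qed
  show "signed_perm n \<pi>" unfolding \<pi>_def using ins_sp[OF sp p] s by blast
  show "del n ?p \<pi> = \<pi>'" unfolding \<pi>_def using del_ins[OF sp p] s by blast
  show "qf n \<pi> (Suc e) = qf n \<pi> e + 1"
  proof (cases "e < n")
    case True
    then have pe: "?p = Suc e" unfolding pp_simp by auto
    have q1: "qf n \<pi> (Suc e) = ?s" unfolding \<pi>_def using qf_ins[OF sp p] s pe e by auto
    have q0: "qf n \<pi> e = grw \<bar>?s\<bar> (qf (n-1) \<pi>' e)" unfolding \<pi>_def using qf_ins[OF sp p, of ?s e] s pe e by auto
    show ?thesis using q1 q0 True unfolding sel_def Let_def grw_def by (auto simp: sgn_if)
  next
    case False
    then have en: "e = n" and pe: "?p = n" using e unfolding pp_simp by auto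
    have q1: "qf n \<pi> n = int n" unfolding \<pi>_def using qf_ins[OF sp p, of ?s n] s pe en unfolding sel_def by auto
    have q2: "qf n \<pi> (Suc n) = grw \<bar>?s\<bar> (qf (n-1) \<pi>' n)" unfolding \<pi>_def using qf_ins[OF sp p, of ?s "Suc n"] s pe by auto
    have q3: "qf (n-1) \<pi>' n = int n" unfolding qf_def using n1 by auto
    show ?thesis using q1 q2 q3 en unfolding sel_def grw_def using n1 by (auto simp: sgn_if)
  qed
qed

lemma (in contr) sel_del: "sel n e \<pi>' = \<pi> pp"
proof (cases "e < n")
  case True
  then have pe: "pp = Suc e" "Q e + 1 = \<pi> pp" using adj_rel by auto
  have u: "qf (n-1) \<pi>' e = shr a (Q e)" using Q'[of e] pe e by auto
  show ?thesis
  proof (cases "\<pi> pp > 0")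
    case True
    then have "shr a (Q e) = Q e" "Q e \<ge> 0" using pe unfolding a_def shr_def by auto
    then show ?thesis using u pe \<open>e < n\<close> unfolding sel_def Let_def by auto
  next
    case False
    then have "\<pi> pp < 0" using pinz by auto
    then have "shr a (Q e) = \<pi> pp" using pe unfolding a_def shr_def by (auto simp: sgn_if)
    then show ?thesis using u \<open>\<pi> pp < 0\<close> \<open>e < n\<close> unfolding sel_def Let_def by auto
  qed
next
  case False
  then have en: "e = n" using e by auto
  have "Q (Suc n) = int n + 1" unfolding qf_def by simp
  then have "Q e = int n" using adj en by simp
  then show ?thesis using adj_rel en unfolding sel_def by auto
qed

lemma gsh_inj: "x \<noteq> e \<Longrightarrow> y \<noteq> e \<Longrightarrow> gshf e x = gshf e y \<Longrightarrow> x = y"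
  unfolding gsh_simp by (auto split: if_splits)

lemma count_step:
  assumes n1: "1 \<le> n" and e: "e \<le> n" and eB: "e \<notin> B" and B: "B \<subseteq> {0..n}"
  shows "card (Aset n B) = card (Aset (n-1) (gshf e ` B))"
proof -
  let ?p = "ppf n e" and ?g = "gshf e"
  let ?f = "del n ?p" and ?h = "\<lambda>\<pi>'. ins n ?p (sel n e \<pi>') \<pi>'"
  have cA: "contr n e \<pi>" if "\<pi> \<in> Aset n B" for \<pi>
  proof -
    have "e \<notin> Bset n \<pi>" using that eB unfolding Aset_def by auto
    then have "qf n \<pi> (Suc e) = qf n \<pi> e + 1" using e unfolding Bset_def by auto
    then show ?thesis using that n1 e unfolding Aset_def by unfold_locales auto
  qed
  show ?thesis
  proof (rule bij_betw_same_card[of ?f], rule bij_betw_byWitness[where f' = ?h])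
    show "\<forall>\<pi>\<in>Aset n B. ?h (?f \<pi>) = \<pi>"
    proof
      fix \<pi> assume a: "\<pi> \<in> Aset n B"
      interpret contr n e \<pi> using cA[OF a] .
      show "?h (?f \<pi>) = \<pi>" using sel_del ins_del[OF sp pp_in] by simp
    qed
    show "\<forall>\<pi>'\<in>Aset (n-1) (?g ` B). ?f (?h \<pi>') = \<pi>'"
      using recon(3) n1 e unfolding Aset_def by blast
    show "?f ` Aset n B \<subseteq> Aset (n-1) (?g ` B)"
    proof
      fix y assume "y \<in> ?f ` Aset n B"
      then obtain \<pi> where a: "\<pi> \<in> Aset n B" "y = ?f \<pi>" by auto
      interpret contr n e \<pi> using cA[OF a(1)] .
      have "signed_perm (n-1) \<pi>'" by (rule sp')
      moreover have "Bset (n-1) \<pi>' = ?g ` B" using bset_contr a(1) unfolding Aset_def by simp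
      moreover have "bg_cycles (n-1) \<pi>' + 2 = n - 1 + 1" using cyc_contr a(1) n1 unfolding Aset_def by simp
      ultimately show "y \<in> Aset (n-1) (?g ` B)" using a(2) unfolding Aset_def pp_simp by simp
    qed
    show "?h ` Aset (n-1) (?g ` B) \<subseteq> Aset n B"
    proof
      fix y assume "y \<in> ?h ` Aset (n-1) (?g ` B)"
      then obtain \<pi>' where a: "\<pi>' \<in> Aset (n-1) (?g ` B)" "y = ?h \<pi>'" by auto
      have sp': "signed_perm (n-1) \<pi>'" using a unfolding Aset_def by auto
      note r = recon[OF sp' n1 e]
      interpret contr n e y using r(1,2) a(2) n1 e by unfold_locales auto
      have dd: "del n pp y = \<pi>'" using r(3) a(2) unfolding pp_simp by simp
      have "?g ` Bset n y = ?g ` B" using bset_contr dd a(1) unfolding Aset_def gsh_simp by simp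
      moreover have "e \<notin> Bset n y" using adj unfolding Bset_def by auto
      moreover have "inj_on ?g (- {e})"
      proof (rule inj_onI)
        fix x z assume "x \<in> - {e}" "z \<in> - {e}" "?g x = ?g z"
        then show "x = z" using gsh_inj[of x e z] by simp
      qed
      ultimately have "Bset n y = B"
        using eB inj_on_image_eq_iff[of ?g "- {e}" "Bset n y" B] by auto
      moreover have "bg_cycles n y + 2 = n + 1" using cyc_contr dd a(1) n1 unfolding Aset_def by simp
      ultimately show "y \<in> Aset n B" using sp unfolding Aset_def by simp
    qed
  qed
qed

lemma Bset_sub: "Bset n \<pi> \<subseteq> {0..n}" unfolding Bset_def by auto

lemma count_main: "B \<subseteq> {0..n} \<Longrightarrow> card (Aset n B) = Gf (card B)"
proof (induction n arbitrary: B)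
  case 0
  show ?case
  proof (cases "B = {}")
    case True
    have "Aset 0 B = {}"
    proof -
      have "1 \<le> bg_cycles 0 \<pi>" if "signed_perm 0 \<pi>" for \<pi> using cyc_ge1[OF that] .
      then show ?thesis unfolding Aset_def by fastforce
    qed
    then show ?thesis using True unfolding Gf_def by simp
  next
    case False
    then have "B = {0}" using 0 by auto
    then show ?thesis unfolding Gf_def by simp
  qed
next
  case (Suc m)
  show ?case
  proof (cases "B = {0..Suc m}")
    case True then show ?thesis unfolding Gf_def by simp
  next
    case False
    then have "\<not> {0..Suc m} \<subseteq> B" using Suc.prems by auto
    then obtain e where e0: "e \<in> {0..Suc m}" "e \<notin> B" by blast
    then have e: "e \<le> Suc m" "e \<notin> B" by auto
    have "card (Aset (Suc m) B) = card (Aset m (gshf e ` B))"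
      using count_step[of "Suc m" e B] e Suc.prems by simp
    also have "\<dots> = Gf (card (gshf e ` B))"
    proof (rule Suc.IH)
      show "gshf e ` B \<subseteq> {0..m}" using Suc.prems e unfolding gsh_simp by (auto split: if_splits)
    qed
    also have "card (gshf e ` B) = card B"
    proof (rule card_image, rule inj_onI)
      fix x y assume "x \<in> B" "y \<in> B" "gshf e x = gshf e y"
      then show "x = y" using gsh_inj e by metis
    qed
    finally show ?thesis .
  qed
qed

definition lf :: "int list \<Rightarrow> nat \<Rightarrow> int" where
  "lf l i = (if 1 \<le> i \<and> i \<le> length l then l ! (i - 1) else 0)"

definition L48 :: "int list list" where "L48 = [[1,2,3], [1,2,-3], [1,-2,3], [1,-2,-3], [-1,2,3], [-1,2,-3], [-1,-2,3], [-1,-2,-3], [1,3,2], [1,3,-2], [1,-3,2], [1,-3,-2], [-1,3,2], [-1,3,-2], [-1,-3,2], [-1,-3,-2], [2,1,3], [2,1,-3], [2,-1,3], [2,-1,-3], [-2,1,3], [-2,1,-3], [-2,-1,3], [-2,-1,-3], [2,3,1], [2,3,-1], [2,-3,1], [2,-3,-1], [-2,3,1], [-2,3,-1], [-2,-3,1], [-2,-3,-1], [3,1,2], [3,1,-2], [3,-1,2], [3,-1,-2], [-3,1,2], [-3,1,-2], [-3,-1,2], [-3,-1,-2], [3,2,1], [3,2,-1], [3,-2,1], [3,-2,-1], [-3,2,1], [-3,2,-1], [-3,-2,1], [-3,-2,-1]]"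
definition L5 :: "int list list" where "L5 = [[-1,2,-3], [-2,-3,1], [3,-1,-2], [3,2,1], [-3,2,-1]]"
definition L8 :: "int list list" where "L8 = [[1,2], [1,-2], [-1,2], [-1,-2], [2,1], [2,-1], [-2,1], [-2,-1]]"
definition L4 :: "int list list" where "L4 = [[-1,-2], [2,1], [2,-1], [-2,1]]"

definition fullbpL where "fullbpL n l = (\<forall>e\<in>set [0..<n+1]. qf n (lf l) (Suc e) \<noteq> qf n (lf l) e + 1)"
definition critL where "critL n l = (\<exists>j\<in>set [0..<2*n+2]. unsigned_ext n (lf l) j = 1 \<and> unsigned_ext n (lf l) 1 = flip (unsigned_ext n (lf l) (flip j)))"

lemma lf_inj: "length l = length l' \<Longrightarrow> lf l = lf l' \<Longrightarrow> l = l'"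
proof (rule nth_equalityI)
  fix i assume a: "length l = length l'" "lf l = lf l'" "i < length l"
  then have "lf l (Suc i) = lf l' (Suc i)" by simp
  then show "l ! i = l' ! i" using a unfolding lf_def by auto
qed

lemma lf_sp:
  assumes "length l = n" "distinct (map abs l)" "\<forall>x\<in>set l. x \<noteq> 0 \<and> \<bar>x\<bar> \<le> int n"
  shows "signed_perm n (lf l)"
proof (rule sp_intro)
  show "\<And>i. i \<notin> {1..n} \<Longrightarrow> lf l i = 0" unfolding lf_def using assms by auto
  show "lf l i \<noteq> 0 \<and> \<bar>lf l i\<bar> \<le> int n" if "i \<in> {1..n}" for i
    using that assms nth_mem[of "i-1" l] unfolding lf_def by auto
  show "i = i'" if "i \<in> {1..n}" "i' \<in> {1..n}" "\<bar>lf l i\<bar> = \<bar>lf l i'\<bar>" for i i'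
  proof -
    have "map abs l ! (i-1) = map abs l ! (i'-1)" using that assms unfolding lf_def by auto
    then have "i - 1 = i' - 1" using nth_eq_iff_index_eq[of "map abs l" "i-1" "i'-1"] assms(1,2) that by auto
    then show ?thesis using that by auto
  qed
qed

lemma Bset_full_iff: "Bset n \<rho> = {0..n} \<longleftrightarrow> (\<forall>e\<in>set [0..<n+1]. qf n \<rho> (Suc e) \<noteq> qf n \<rho> e + 1)"
proof -
  have s: "Bset n \<rho> \<subseteq> {0..n}" unfolding Bset_def by blast
  have "Bset n \<rho> = {0..n} \<longleftrightarrow> (\<forall>e\<in>{0..n}. e \<in> Bset n \<rho>)" using s by blast
  also have "\<dots> \<longleftrightarrow> (\<forall>e\<in>{0..n}. qf n \<rho> (Suc e) \<noteq> qf n \<rho> e + 1)" unfolding Bset_def by blast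
  also have "\<dots> \<longleftrightarrow> (\<forall>e\<in>set [0..<n+1]. qf n \<rho> (Suc e) \<noteq> qf n \<rho> e + 1)"
    by (simp only: set_upt atLeastLessThanSuc_atLeastAtMost Suc_eq_plus1[symmetric])
  finally show ?thesis .
qed

lemma sp3_list: "signed_perm 3 \<rho> \<Longrightarrow> \<rho> = lf [\<rho> 1, \<rho> 2, \<rho> 3] \<and> [\<rho> 1, \<rho> 2, \<rho> 3] \<in> set L48"
proof -
  assume sp: "signed_perm 3 \<rho>"
  have eq: "\<rho> = lf [\<rho> 1, \<rho> 2, \<rho> 3]"
  proof
    fix i show "\<rho> i = lf [\<rho> 1, \<rho> 2, \<rho> 3] i"
    proof (cases "i \<in> {1..3}")
      case True then have "i = 1 \<or> i = 2 \<or> i = 3" by auto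
      then show ?thesis unfolding lf_def by auto
    next
      case False then show ?thesis using sp_zero[OF sp] unfolding lf_def by auto
    qed
  qed
  have v: "\<rho> i = -3 \<or> \<rho> i = -2 \<or> \<rho> i = -1 \<or> \<rho> i = 1 \<or> \<rho> i = 2 \<or> \<rho> i = 3" if "i \<in> {1..3}" for i
    using sp_nz[OF sp that] sp_le[OF sp that] by auto
  have d: "\<bar>\<rho> 1\<bar> \<noteq> \<bar>\<rho> 2\<bar>" "\<bar>\<rho> 1\<bar> \<noteq> \<bar>\<rho> 3\<bar>" "\<bar>\<rho> 2\<bar> \<noteq> \<bar>\<rho> 3\<bar>"
    using sp_absinj[OF sp, of 1 2] sp_absinj[OF sp, of 1 3] sp_absinj[OF sp, of 2 3] by auto
  have "[\<rho> 1, \<rho> 2, \<rho> 3] \<in> set L48"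
    using v[of 1] v[of 2] v[of 3] d by auto (simp_all add: L48_def)
  then show ?thesis using eq by simp
qed

lemma sp2_list: "signed_perm 2 \<rho> \<Longrightarrow> \<rho> = lf [\<rho> 1, \<rho> 2] \<and> [\<rho> 1, \<rho> 2] \<in> set L8"
proof -
  assume sp: "signed_perm 2 \<rho>"
  have eq: "\<rho> = lf [\<rho> 1, \<rho> 2]"
  proof
    fix i show "\<rho> i = lf [\<rho> 1, \<rho> 2] i"
    proof (cases "i \<in> {1..2}")
      case True then have "i = 1 \<or> i = 2" by auto
      then show ?thesis unfolding lf_def by auto
    next
      case False then show ?thesis using sp_zero[OF sp] unfolding lf_def by auto
    qed
  qed
  have v: "\<rho> i = -2 \<or> \<rho> i = -1 \<or> \<rho> i = 1 \<or> \<rho> i = 2" if "i \<in> {1..2}" for i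
    using sp_nz[OF sp that] sp_le[OF sp that] by auto
  have d: "\<bar>\<rho> 1\<bar> \<noteq> \<bar>\<rho> 2\<bar>" using sp_absinj[OF sp, of 1 2] by auto
  have "[\<rho> 1, \<rho> 2] \<in> set L8"
    using v[of 1] v[of 2] d by auto (simp_all add: L8_def)
  then show ?thesis using eq by simp
qed

lemma comp48: "\<forall>l\<in>set L48. fullbpL 3 l \<and> critL 3 l \<longrightarrow> l \<in> set L5"
  unfolding L48_def L5_def
  by (simp add: fullbpL_def critL_def qf_def lf_def unsigned_ext_def flip_def upt_rec Let_def)

lemma comp5: "\<forall>l\<in>set L5. fullbpL 3 l \<and> critL 3 l \<and> length l = 3 \<and> distinct (map abs l) \<and> (\<forall>x\<in>set l. x \<noteq> 0 \<and> \<bar>x\<bar> \<le> 3)"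
  unfolding L5_def
  by (simp add: fullbpL_def critL_def qf_def lf_def unsigned_ext_def flip_def upt_rec Let_def)

lemma comp8: "\<forall>l\<in>set L8. fullbpL 2 l \<longrightarrow> l \<in> set L4"
  unfolding L8_def L4_def
  by (simp add: fullbpL_def qf_def lf_def upt_rec)

lemma comp4: "\<forall>l\<in>set L4. fullbpL 2 l \<and> length l = 2 \<and> distinct (map abs l) \<and> (\<forall>x\<in>set l. x \<noteq> 0 \<and> \<bar>x\<bar> \<le> 2)"
  unfolding L4_def
  by (simp add: fullbpL_def qf_def lf_def upt_rec)

context
  fixes \<rho> :: "nat \<Rightarrow> int"
  assumes sp: "signed_perm 3 \<rho>" and full: "Bset 3 \<rho> = {0..3}"
begin

abbreviation "e3 \<equiv> unsigned_ext 3 \<rho>"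
abbreviation "E \<equiv> bg_adj 3 \<rho>"

lemma crit3: "bg_cycles 3 \<rho> = 2 \<longleftrightarrow> (\<exists>j\<in>set [0..<8]. e3 j = 1 \<and> e3 1 = flip (e3 (flip j)))"
proof -
  let ?V = "{0..7::nat}"
  have V: "?V = {0..2*3+1}" by simp
  have inj: "\<And>a b. a \<le> 7 \<Longrightarrow> b \<le> 7 \<Longrightarrow> e3 a = e3 b \<Longrightarrow> a = b" using ext_inj[OF sp] by simp
  have e0: "e3 0 = 0" by (simp add: ext_formula qf_def Rv_def)
  obtain j1 where j1: "j1 \<le> 7" "e3 j1 = 1" using ext_surj[OF sp, of 1] by auto
  define b1 where "b1 = e3 (flip j1)"
  have fj1: "flip j1 \<le> 7" using flip_le[of j1 3] j1 by simp
  have na0: "e3 1 \<noteq> 1" using full_noadj[OF sp full, of 0] e0 by (simp add: flip_def)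
  have j1n0: "j1 \<noteq> 0"
  proof
    assume "j1 = 0" then show False using j1(2) e0 by simp
  qed
  have j1n1: "j1 \<noteq> 1" using j1 na0 by auto
  have fj1n0: "flip j1 \<noteq> 0" using j1n1 unfolding flip_def by presburger
  have fj1n1: "flip j1 \<noteq> 1" using j1n0 unfolding flip_def by presburger
  have b1le: "b1 \<le> 7" unfolding b1_def using ext_le[OF sp, of "flip j1"] fj1 by simp
  have d1: "b1 \<noteq> 0" unfolding b1_def using inj[of "flip j1" 0] fj1 fj1n0 e0 by auto
  have d2: "b1 \<noteq> 1" unfolding b1_def using inj[of "flip j1" j1] fj1 j1 flip_neq[of j1] by auto
  have d3: "e3 1 \<noteq> b1" unfolding b1_def using inj[of 1 "flip j1"] fj1 fj1n1 by auto
  have d4: "e3 1 \<noteq> 0" using inj[of 1 0] e0 by auto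
  let ?S = "{0, 1, e3 1, b1}"
  have cS: "card ?S = 4" using d1 d2 d3 d4 na0 by auto
  have ed1: "(0, 1) \<in> E" unfolding bg_adj_char by (simp add: flip_def)
  have ed2: "(0, e3 1) \<in> E" unfolding bg_adj_char using e0 by (intro disjI1 exI[of _ 0]) (simp add: flip_def)
  have ed3: "(1, b1) \<in> E" unfolding bg_adj_char b1_def using j1 by (intro disjI1 exI[of _ j1]) simp
  have SC: "?S \<subseteq> E\<^sup>* `` {0}" using ed1 ed2 ed3 by (auto intro: rtrancl_into_rtrancl)
  have SV: "?S \<subseteq> ?V" using b1le ext_le[OF sp, of 1] by auto
  have fin: "finite (E\<^sup>* `` {0})" using class_sub[OF bg_sub[OF sp], of 0] by (auto intro: finite_subset)
  have C0q: "E\<^sup>* `` {0} \<in> ?V // E\<^sup>*" unfolding quotient_def by auto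
  have finq: "finite (?V // E\<^sup>*)" unfolding quotient_def by simp
  have cyc: "bg_cycles 3 \<rho> = card (?V // E\<^sup>*)" unfolding bg_cycles_def by simp
  have ex_iff: "(\<exists>j\<in>set [0..<8]. e3 j = 1 \<and> e3 1 = flip (e3 (flip j))) \<longleftrightarrow> e3 1 = flip b1"
  proof
    assume "\<exists>j\<in>set [0..<8]. e3 j = 1 \<and> e3 1 = flip (e3 (flip j))"
    then obtain j where j: "j < 8" "e3 j = 1" "e3 1 = flip (e3 (flip j))" by auto
    then have "j = j1" using inj[of j j1] j1 by auto
    then show "e3 1 = flip b1" using j unfolding b1_def by simp
  next
    assume "e3 1 = flip b1"
    then show "\<exists>j\<in>set [0..<8]. e3 j = 1 \<and> e3 1 = flip (e3 (flip j))" using j1 unfolding b1_def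
      by (intro bexI[of _ j1]) auto
  qed
  show ?thesis
  proof (cases "e3 1 = flip b1")
    case True
    have closed: "y \<in> ?S" if x: "x \<in> ?S" and xy: "(x,y) \<in> E" for x y
    proof -
      have "(\<exists>j\<le>2*3+1. x = e3 j \<and> y = e3 (flip j)) \<or> (x \<le> 2*3+1 \<and> y = flip x)"
        using bg_adj_char xy by blast
      then show ?thesis
      proof
        assume "\<exists>j\<le>2*3+1. x = e3 j \<and> y = e3 (flip j)"
        then obtain j where j: "j \<le> 7" "x = e3 j" "y = e3 (flip j)" by auto
        have "x = 0 \<or> x = 1 \<or> x = e3 1 \<or> x = b1" using x by auto
        then show ?thesis
        proof (elim disjE)
          assume "x = 0" then have "j = 0" using inj[of j 0] j e0 by auto
          then show ?thesis using j by (simp add: flip_def)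
        next
          assume "x = 1" then have "j = j1" using inj[of j j1] j j1 by auto
          then show ?thesis using j unfolding b1_def by simp
        next
          assume "x = e3 1" then have "j = 1" using inj[of j 1] j by auto
          then show ?thesis using j e0 by (simp add: flip_def)
        next
          assume "x = b1" then have "j = flip j1" using inj[of j "flip j1"] j fj1 unfolding b1_def by auto
          then show ?thesis using j j1 by simp
        qed
      next
        assume a: "x \<le> 2*3+1 \<and> y = flip x"
        have "x = 0 \<or> x = 1 \<or> x = e3 1 \<or> x = b1" using x by auto
        then show ?thesis using a True by (auto simp: flip_def)
      qed
    qed
    have C0S: "E\<^sup>* `` {0} \<subseteq> ?S"
    proof
      fix y assume "y \<in> E\<^sup>* `` {0}"
      then have "(0,y) \<in> E\<^sup>*" by simp
      then show "y \<in> ?S"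
      proof (induction rule: rtrancl_induct)
        case base show ?case by simp
      next
        case (step y z) then show ?case using closed[of y z] by blast
      qed
    qed
    have "card (?V - ?S) = 4" using cS SV by (simp add: card_Diff_subset finite_subset)
    then obtain y where y: "y \<in> ?V" "y \<notin> ?S" by (metis Diff_iff card.empty ex_in_conv zero_neq_numeral)
    have Cyq: "E\<^sup>* `` {y} \<in> ?V // E\<^sup>*" using y unfolding quotient_def by auto
    have "E\<^sup>* `` {y} \<noteq> E\<^sup>* `` {0}" using y C0S by auto
    then have "card {E\<^sup>* `` {0}, E\<^sup>* `` {y}} = 2" by auto
    moreover have "{E\<^sup>* `` {0}, E\<^sup>* `` {y}} \<subseteq> ?V // E\<^sup>*" using C0q Cyq by auto
    ultimately have ge: "2 \<le> card (?V // E\<^sup>*)" using finq by (metis card_mono)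
    have "4 * bg_cycles 3 \<rho> \<le> 2*3+2" using full_bound[OF sp full] .
    then have "bg_cycles 3 \<rho> = 2" using ge cyc by simp
    then show ?thesis using ex_iff True by simp
  next
    case False
    have w1: "(b1, flip b1) \<in> E" using b1le unfolding bg_adj_char by simp
    have wC: "flip b1 \<in> E\<^sup>* `` {0}" using ed1 ed3 w1 by (auto intro: rtrancl_into_rtrancl)
    have wS: "flip b1 \<notin> ?S"
    proof -
      have "flip b1 \<noteq> 0" using d2 by (metis flip_flip flip_def even_zero One_nat_def Suc_eq_plus1 add_0)
      moreover have "flip b1 \<noteq> 1" using d1 by (metis flip_flip flip_def odd_one diff_self_eq_0)
      moreover have "flip b1 \<noteq> b1" by (rule flip_neq)
      ultimately show ?thesis using False by auto
    qed
    have "card (insert (flip b1) ?S) = 5" using cS wS by simp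
    moreover have "insert (flip b1) ?S \<subseteq> E\<^sup>* `` {0}" using SC wC by auto
    ultimately have c5: "5 \<le> card (E\<^sup>* `` {0})" using fin by (metis card_mono)
    have "bg_cycles 3 \<rho> \<noteq> 2"
    proof
      assume c2: "bg_cycles 3 \<rho> = 2"
      have "?V // E\<^sup>* \<noteq> {E\<^sup>* `` {0}}" using c2 cyc by auto
      then obtain X where X: "X \<in> ?V // E\<^sup>*" "X \<noteq> E\<^sup>* `` {0}" using C0q by blast
      obtain x where x: "x \<in> ?V" "X = E\<^sup>* `` {x}" using X(1) unfolding quotient_def by blast
      have c4: "4 \<le> card X" using full_class4[OF sp full, of x] x by simp
      have disj: "X \<inter> E\<^sup>* `` {0} = {}" using quot_classes_disj[OF bg_sym[OF sp] X(1) C0q X(2)] .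
      have finX: "finite X" using class_sub[OF bg_sub[OF sp], of x] x by (auto intro: finite_subset)
      have "X \<union> E\<^sup>* `` {0} \<subseteq> ?V" using class_sub[OF bg_sub[OF sp], of x] class_sub[OF bg_sub[OF sp], of 0] x by auto
      then have "card (X \<union> E\<^sup>* `` {0}) \<le> card ?V" by (intro card_mono) auto
      then have "card (X \<union> E\<^sup>* `` {0}) \<le> 8" by simp
      moreover have "card (X \<union> E\<^sup>* `` {0}) = card X + card (E\<^sup>* `` {0})" using disj finX fin by (simp add: card_Un_disjoint)
      ultimately show False using c4 c5 by simp
    qed
    then show ?thesis using ex_iff False by simp
  qed
qed

end

lemma Gf4: "Gf 4 = 5"
proof -
  have eq: "Aset 3 {0..3} = lf ` set L5"
  proof
    show "Aset 3 {0..3} \<subseteq> lf ` set L5"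
    proof
      fix \<rho> assume a: "\<rho> \<in> Aset 3 {0..3}"
      then have sp: "signed_perm 3 \<rho>" and full: "Bset 3 \<rho> = {0..3}" and c: "bg_cycles 3 \<rho> = 2"
        unfolding Aset_def by auto
      obtain l where l: "\<rho> = lf l" "l \<in> set L48" using sp3_list[OF sp] by blast
      have "fullbpL 3 l" using full l(1) Bset_full_iff unfolding fullbpL_def by blast
      moreover have "critL 3 l" using crit3[OF sp full] c l(1) unfolding critL_def by simp
      ultimately have "l \<in> set L5" using comp48 l(2) by blast
      then show "\<rho> \<in> lf ` set L5" using l(1) by blast
    qed
    show "lf ` set L5 \<subseteq> Aset 3 {0..3}"
    proof
      fix \<rho> assume "\<rho> \<in> lf ` set L5"
      then obtain l where l: "\<rho> = lf l" "l \<in> set L5" by blast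
      have p: "fullbpL 3 l" "critL 3 l" "length l = 3" "distinct (map abs l)" "\<forall>x\<in>set l. x \<noteq> 0 \<and> \<bar>x\<bar> \<le> 3"
        using comp5 l(2) by blast+
      have sp: "signed_perm 3 \<rho>" using lf_sp[of l 3] p l(1) by simp
      have full: "Bset 3 \<rho> = {0..3}" using p(1) l(1) Bset_full_iff unfolding fullbpL_def by blast
      have "bg_cycles 3 \<rho> = 2" using crit3[OF sp full] p(2) l(1) unfolding critL_def by simp
      then show "\<rho> \<in> Aset 3 {0..3}" using sp full unfolding Aset_def by simp
    qed
  qed
  have "inj_on lf (set L5)"
  proof (rule inj_onI)
    fix x y assume "x \<in> set L5" "y \<in> set L5" "lf x = lf y"
    then show "x = y" using lf_inj comp5 by metis
  qed
  then have "card (lf ` set L5) = card (set L5)" by (rule card_image)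
  also have "\<dots> = 5" unfolding L5_def by simp
  finally show ?thesis unfolding Gf_def using eq by simp
qed

lemma Gf3: "Gf 3 = 4"
proof -
  have eq: "Aset 2 {0..2} = lf ` set L4"
  proof
    show "Aset 2 {0..2} \<subseteq> lf ` set L4"
    proof
      fix \<rho> assume a: "\<rho> \<in> Aset 2 {0..2}"
      then have sp: "signed_perm 2 \<rho>" and full: "Bset 2 \<rho> = {0..2}"
        unfolding Aset_def by auto
      obtain l where l: "\<rho> = lf l" "l \<in> set L8" using sp2_list[OF sp] by blast
      have "fullbpL 2 l" using full l(1) Bset_full_iff unfolding fullbpL_def by blast
      then have "l \<in> set L4" using comp8 l(2) by blast
      then show "\<rho> \<in> lf ` set L4" using l(1) by blast
    qed
    show "lf ` set L4 \<subseteq> Aset 2 {0..2}"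
    proof
      fix \<rho> assume "\<rho> \<in> lf ` set L4"
      then obtain l where l: "\<rho> = lf l" "l \<in> set L4" by blast
      have p: "fullbpL 2 l" "length l = 2" "distinct (map abs l)" "\<forall>x\<in>set l. x \<noteq> 0 \<and> \<bar>x\<bar> \<le> 2"
        using comp4 l(2) by blast+
      have sp: "signed_perm 2 \<rho>" using lf_sp[of l 2] p l(1) by simp
      have full: "Bset 2 \<rho> = {0..2}" using p(1) l(1) Bset_full_iff unfolding fullbpL_def by blast
      have "4 * bg_cycles 2 \<rho> \<le> 2*2+2" using full_bound[OF sp full] .
      moreover have "1 \<le> bg_cycles 2 \<rho>" using cyc_ge1[OF sp] .
      ultimately have "bg_cycles 2 \<rho> = 1" by simp
      then show "\<rho> \<in> Aset 2 {0..2}" using sp full unfolding Aset_def by simp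
    qed
  qed
  have "inj_on lf (set L4)"
  proof (rule inj_onI)
    fix x y assume "x \<in> set L4" "y \<in> set L4" "lf x = lf y"
    then show "x = y" using lf_inj comp4 by metis
  qed
  then have "card (lf ` set L4) = card (set L4)" by (rule card_image)
  also have "\<dots> = 4" unfolding L4_def by simp
  finally show ?thesis unfolding Gf_def using eq by simp
qed

lemma Gf1: "Gf 1 = 0"
proof -
  have "Bset 0 \<rho> = {}" for \<rho> unfolding Bset_def qf_def by auto
  then have "Aset 0 {0} = {}" unfolding Aset_def by auto
  then show ?thesis unfolding Gf_def by simp
qed

lemma Gf2: "Gf 2 = 0"
proof -
  have "Aset 1 {0..1} = {}" unfolding Aset_def using cyc_ge1 by fastforce
  then show ?thesis unfolding Gf_def by simp
qed

lemma Gf_big: "b \<ge> 5 \<Longrightarrow> Gf b = 0"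
proof -
  assume b: "b \<ge> 5"
  have "Aset (b-1) {0..b-1} = {}"
  proof (rule ccontr)
    assume "Aset (b-1) {0..b-1} \<noteq> {}"
    then obtain \<rho> where r: "signed_perm (b-1) \<rho>" "Bset (b-1) \<rho> = {0..b-1}" "bg_cycles (b-1) \<rho> + 2 = b - 1 + 1"
      unfolding Aset_def by auto
    have "4 * bg_cycles (b-1) \<rho> \<le> 2*(b-1)+2" using full_bound[OF r(1,2)] .
    then show False using r(3) b by simp
  qed
  then show ?thesis unfolding Gf_def by simp
qed

lemma Gf_all: "Gf b = (if b = 3 then 4 else if b = 4 then 5 else 0)"
proof -
  consider "b = 0" | "b = 1" | "b = 2" | "b = 3" | "b = 4" | "b \<ge> 5" by linarith
  then show ?thesis
  proof cases
    case 1 then show ?thesis by (simp add: Gf_def)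
  next
    case 2 then show ?thesis using Gf1 by simp
  next
    case 3 then show ?thesis using Gf2 by simp
  next
    case 4 then show ?thesis using Gf3 by simp
  next
    case 5 then show ?thesis using Gf4 by simp
  next
    case 6 then show ?thesis using Gf_big by simp
  qed
qed

lemma finite_PS: "finite {\<pi>. signed_perm n \<pi>}"
proof -
  have "{\<pi>. signed_perm n \<pi>} \<subseteq> lf ` {l. set l \<subseteq> {-int n..int n} \<and> length l = n}"
  proof
    fix \<pi> assume "\<pi> \<in> {\<pi>. signed_perm n \<pi>}"
    then have sp: "signed_perm n \<pi>" by simp
    have "\<pi> = lf (map \<pi> [1..<n+1])"
    proof
      fix i show "\<pi> i = lf (map \<pi> [1..<n+1]) i"
      proof (cases "1 \<le> i \<and> i \<le> n")
        case True
        then have il: "i - 1 < n" by auto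
        have "map \<pi> [1..<n+1] ! (i-1) = \<pi> (1 + (i-1))"
          using il nth_map[of "i-1" "[1..<n+1]" \<pi>] nth_upt[of 1 "i-1" "n+1"] by simp
        then show ?thesis using True unfolding lf_def by simp
      next
        case False then show ?thesis unfolding lf_def using sp_zero[OF sp, of i] by auto
      qed
    qed
    moreover have "set (map \<pi> [1..<n+1]) \<subseteq> {-int n..int n}" using sp_le[OF sp] by fastforce
    ultimately show "\<pi> \<in> lf ` {l. set l \<subseteq> {-int n..int n} \<and> length l = n}" by fastforce
  qed
  moreover have "finite {l. set l \<subseteq> {-int n..int n} \<and> length l = n}" by (rule finite_lists_length_eq) simp
  ultimately show ?thesis by (meson finite_imageI finite_subset)
qed

lemma sum_subsets:
  assumes "finite A"
  shows "(\<Sum>B\<in>Pow A. h (card B)) = (\<Sum>b\<in>{0..card A}. (card A choose b) * h b)"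
proof -
  have "(\<Sum>B\<in>Pow A. h (card B)) = (\<Sum>b\<in>{0..card A}. \<Sum>B\<in>{B \<in> Pow A. card B = b}. h (card B))"
    using assms by (intro sum.group[symmetric]) (auto intro: card_mono)
  also have "\<dots> = (\<Sum>b\<in>{0..card A}. (card A choose b) * h b)"
  proof (rule sum.cong)
    fix b assume "b \<in> {0..card A}"
    have "(\<Sum>B\<in>{B \<in> Pow A. card B = b}. h (card B)) = (\<Sum>B\<in>{B \<in> Pow A. card B = b}. h b)" by simp
    also have "\<dots> = card {B \<in> Pow A. card B = b} * h b" by simp
    also have "card {B \<in> Pow A. card B = b} = card A choose b"
      using n_subsets[OF assms, of b] by (simp add: Pow_def)
    finally show "(\<Sum>B\<in>{B \<in> Pow A. card B = b}. h (card B)) = (card A choose b) * h b" .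
  qed simp
  finally show ?thesis .
qed

theorem mainTheorem7:
  fixes n :: nat
  assumes "n \<ge> 1"
  shows "S_H_pm n (n - 1) = 5 * ((n + 1) choose 4) + 4 * ((n + 1) choose 3)"
proof -
  have set_eq: "{\<pi>. signed_perm n \<pi> \<and> bg_cycles n \<pi> = n - 1} = (\<Union>B\<in>Pow {0..n}. Aset n B)"
  proof
    show "{\<pi>. signed_perm n \<pi> \<and> bg_cycles n \<pi> = n - 1} \<subseteq> (\<Union>B\<in>Pow {0..n}. Aset n B)"
      using assms Bset_sub unfolding Aset_def by fastforce
    show "(\<Union>B\<in>Pow {0..n}. Aset n B) \<subseteq> {\<pi>. signed_perm n \<pi> \<and> bg_cycles n \<pi> = n - 1}"
      using assms unfolding Aset_def by auto
  qed
  have fa: "finite (Aset n B)" for B using finite_PS[of n] unfolding Aset_def by (rule finite_subset[rotated]) auto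
  have "S_H_pm n (n - 1) = card (\<Union>B\<in>Pow {0..n}. Aset n B)" unfolding S_H_pm_def set_eq ..
  also have "\<dots> = (\<Sum>B\<in>Pow {0..n}. card (Aset n B))"
  proof (rule card_UN_disjoint)
    show "finite (Pow {0..n})" by simp
    show "\<forall>B\<in>Pow {0..n}. finite (Aset n B)" using fa by simp
    show "\<forall>i\<in>Pow {0..n}. \<forall>j\<in>Pow {0..n}. i \<noteq> j \<longrightarrow> Aset n i \<inter> Aset n j = {}"
      unfolding Aset_def by auto
  qed
  also have "\<dots> = (\<Sum>B\<in>Pow {0..n}. Gf (card B))" by (rule sum.cong) (auto simp: count_main)
  also have "\<dots> = (\<Sum>b\<in>{0..n+1}. ((n+1) choose b) * Gf b)" using sum_subsets[of "{0..n}" Gf] by simp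
  also have "\<dots> = (\<Sum>b\<in>{0..n+1}. (if b = 3 then ((n+1) choose 3) * 4 else 0) + (if b = 4 then ((n+1) choose 4) * 5 else 0))"
    by (rule sum.cong) (auto simp: Gf_all)
  also have "\<dots> = (if 3 \<le> n+1 then ((n+1) choose 3) * 4 else 0) + (if 4 \<le> n+1 then ((n+1) choose 4) * 5 else 0)"
    by (simp add: sum.distrib)
  also have "\<dots> = 5 * ((n + 1) choose 4) + 4 * ((n + 1) choose 3)"
    by (auto simp: binomial_eq_0)
  finally show ?thesis .
qed

end
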